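(* Assume (B1)–(B4) and consider the NL-IAPIAL method described in the context, with cycles $\mathcal C_l$, values $\tilde c_l$ and indices $k_l$. Let $R_\phi:=\phi^*-\phi_*+D_h^2/\lambda$ with $\phi^*:=\inf\{\phi(z):g(z)\preceq_{\mathcal K}0\}$, $\phi_*:=\inf_{z}\phi(z)$, and let $C_0:=\max\{\|p_0\|,\kappa_0\}/(\min\{1,\bar d\}\tau)$. Then for every $l\ge1$ and every $k\in\mathcal C_l$ with $k\ge k_{l-1}+2$ at which $p_k$ is computed, the quantity $\Delta_k=\frac{1}{k-k_{l-1}-1}[\mathcal L_{\tilde c_l}(z_{k_{l-1}+1};p_{k_{l-1}+1})-\mathcal L_{\tilde c_l}(z_k;p_k)]$ satisfies $$\min_{k_{l-1}+2\le j\le k}\|r_j\|^2\le\frac{2\lambda}{1-\sigma^2}\Big(\Delta_k+\frac{4C_0^2}{\tilde c_l}\Big),\qquad \Delta_k\le\frac{1}{k-k_{l-1}-1}\Big(R_\phi+\frac{9C_0^2}{2\tilde c_l}\Big).$$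
   Context: $\mathcal K\subseteq\mathbb{R}^\ell$ is a nonempty closed convex cone, $\mathcal K^*=\{y:\langle y,x\rangle\ge0\ \forall x\in\mathcal K\}$ its dual cone, $u\preceq_{\mathcal K}v$ means $v-u\in\mathcal K$, $\Pi_S$ is the Euclidean projection onto a closed convex set $S$, $\mathrm{dist}(y,S)$ the Euclidean distance. $\partial_\varepsilon\varphi(z):=\{u:\varphi(z')\ge\varphi(z)+\langle u,z'-z\rangle-\varepsilon\ \forall z'\}$, $\partial=\partial_0$. For differentiable $g:\mathbb{R}^n\to\mathbb{R}^\ell$, $\nabla g(z)\in\mathbb{R}^{n\times\ell}$ is the transpose of the Jacobian. $g$ is $\mathcal K$-convex if $g(tz'+(1-t)z)-tg(z')-(1-t)g(z)\preceq_{\mathcal K}0$ for all $z,z'$, $t\in[0,1]$. (B1) $h:\mathbb{R}^n\to(-\infty,\infty]$ proper lsc convex, $K_h$-Lipschitz on its domain; $\mathcal H:=\mathrm{dom}\,h$ compact with diameter $D_h$. (B2) $f$ differentiable on an open set containing $\mathcal H$; $m_f,L_f>0$ with $f(z')-f(z)-\langle\nabla f(z),z'-z\rangle\ge-\frac{m_f}{2}\|z'-z\|^2$ and $\|\nabla f(z')-\nabla f(z)\|\le L_f\|z'-z\|$ on $\mathcal H$. (B3) $g$ is $\mathcal K$-convex, differentiable, $\nabla g$ is $L_g$-Lipschitz on $\mathbb{R}^n$. (B4) there exist $\bar z\in\mathrm{int}\,\mathcal H$, $\tau\in(0,1]$ with $g(\bar z)\preceq_{\mathcal K}0$ and $\max\{\|\nabla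 g(z)p\|,|\langle p,g(\bar z)\rangle|\}\ge\tau\|p\|$ for all $z\in\mathcal H$, $p\in\mathcal K^*$. Constants: $B_f^{(1)}:=\sup_{\mathcal H}\|\nabla f\|$, $B_g^{(0)}:=\sup_{\mathcal H}\|g\|$, $B_g^{(1)}:=\sup_{\mathcal H}\|\nabla g\|$; $\bar d:=\mathrm{dist}(\bar z,\partial\mathcal H)$ ($\partial\mathcal H$ the boundary of $\mathcal H$); $\kappa_0:=2[K_h+B_f^{(1)}]D_h+[\frac{\sigma^2}{2(1-\sigma)^2}+2(\frac{1+\sigma}{1-\sigma})]\frac{D_h^2}{\lambda}$. Functions: $\phi=f+h$; $\mathcal L_c(z;p):=f(z)+h(z)+\frac1{2c}[\mathrm{dist}^2(p+cg(z),-\mathcal K)-\|p\|^2]$; $\widetilde{\mathcal L}_c(z;p):=\mathcal L_c(z;p)-h(z)$, with $\nabla_z\widetilde{\mathcal L}_c(z;p)=\nabla f(z)+\nabla g(z)\Pi_{\mathcal K^*}(p+cg(z))$; $\Lambda(c,p):=L_f+L_g\|p\|+c(B_g^{(0)}L_g+[B_g^{(1)}]^2)$. NL-IAPIAL method. Inputs: $\lambda\in(0,1/(2m_f)]$, $\sigma\in(0,1/\sqrt2]$, $c_1>0$, $(z_0,p_0)\in\mathcal H\times\mathbb{R}^\ell$, $(\hat\rho,\hat\eta)\in\mathbb{R}^2_{++}$. Set $\hat k=0$, $k=1$. Iteration $k$: (1) set $L^\psi_{k-1}:=\lambda\Lambda(c_k,p_{k-1})+1$, $\sigma_{k-1}:=\sigma/\sqrt{L^\psi_{k-1}}$,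 and obtain (by any procedure) $(z_k,v_k,\varepsilon_k)\in\mathbb{R}^n\times\mathbb{R}^n\times\mathbb{R}_+$ with $v_k\in\partial_{\varepsilon_k}(\lambda\mathcal L_{c_k}(\cdot;p_{k-1})+\frac12\|\cdot-z_{k-1}\|^2)(z_k)$ and $\|v_k\|^2+2\varepsilon_k\le\sigma_{k-1}^2\|v_k+z_{k-1}-z_k\|^2$. (2) Set $r_k:=v_k+z_{k-1}-z_k$, $\delta_k:=\varepsilon_k/\lambda$, $\hat z_k:=\mathrm{argmin}_u\{\lambda[\langle\nabla_z\widetilde{\mathcal L}_{c_k}(z_k;p_{k-1}),u-z_k\rangle+h(u)]-\langle r_k,u-z_k\rangle+\frac{L^\psi_{k-1}}2\|u-z_k\|^2\}$, $w_k:=\frac1\lambda[r_k+L^\psi_{k-1}(z_k-\hat z_k)]$, $\hat p_k:=\Pi_{\mathcal K^*}(p_{k-1}+c_kg(\hat z_k))$, $\hat q_k:=(p_{k-1}-\hat p_k)/c_k$, $\hat w_k:=w_k+\nabla_z\widetilde{\mathcal L}_{c_k}(\hat z_k;p_{k-1})-\nabla_z\widetilde{\mathcal L}_{c_k}(z_k;p_{k-1})$; if $\|\hat w_k\|\le\hat\rho$ and $\|\hat q_k\|\le\hat\eta$, stop. (3) $p_k:=\Pi_{\mathcal K^*}(p_{k-1}+c_kg(z_k))$. (4) If $k>\hat k+1$ and $\Delta_k:=\frac{1}{k-\hat k-1}[\mathcal L_{c_k}(z_{\hat k+1};p_{\hat k+1})-\mathcal L_{c_k}(z_k;p_k)]\le\frac{\lambda(1-\sigma^2)\hat\rho^2}{4(1+2\sigma)^2}$,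 set $c_{k+1}=2c_k$ and $\hat k=k$; otherwise $c_{k+1}=c_k$. (5) $k\leftarrow k+1$. Cycles: for $l\ge1$, $\tilde c_l:=2^{l-1}c_1$ and $\mathcal C_l:=\{k: c_k=\tilde c_l\}$ (over generated iterations $k$); $k_l$ is the largest index in $\mathcal C_l$ and $k_0:=0$, so $\mathcal C_l=\{k_{l-1}+1,\dots,k_l\}$ and the value of $\hat k$ during cycle $l$ is $k_{l-1}$. *)

theory Defs
  imports "HOL-Analysis.Analysis"
begin

text \<open>The ambient spaces R^n and R^l are abstract Euclidean spaces 'a and 'b.
The extended-valued function h (with values in (-inf,inf]) is represented by a real-valued
function h together with its effective domain H; h is +infinity outside H, so every
infimum / subgradient inequality over all points is taken over H only.
The transposed Jacobian applied to p, nabla g(z) p, is adjoint (g' z) p, where g' z is the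
(Frechet) derivative of g at z.\<close>

definition dual_cone :: "'b::real_inner set \<Rightarrow> 'b set" where
  "dual_cone K = {y. \<forall>x\<in>K. y \<bullet> x \<ge> 0}"

definition K_convex :: "'b::real_inner set \<Rightarrow> ('a::real_vector \<Rightarrow> 'b) \<Rightarrow> bool" where
  "K_convex K g \<longleftrightarrow> (\<forall>z z' t. 0 \<le> t \<and> t \<le> 1 \<longrightarrow>
      t *\<^sub>R g z' + (1 - t) *\<^sub>R g z - g (t *\<^sub>R z' + (1 - t) *\<^sub>R z) \<in> K)"

text \<open>epsilon-subdifferential of a function that equals F on its domain H and +infinity
outside H.\<close>
definition eps_subdiff :: "'a::real_inner set \<Rightarrow> ('a \<Rightarrow> real) \<Rightarrow> real \<Rightarrow> 'a \<Rightarrow> 'a set" where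
  "eps_subdiff H F \<epsilon> z = {u. z \<in> H \<and> (\<forall>z'\<in>H. F z' \<ge> F z + u \<bullet> (z' - z) - \<epsilon>)}"

definition projK :: "'b::euclidean_space set \<Rightarrow> 'b \<Rightarrow> 'b" where
  "projK K y = closest_point (dual_cone K) y"

definition augL :: "'b::euclidean_space set \<Rightarrow> ('a \<Rightarrow> real) \<Rightarrow> ('a \<Rightarrow> real) \<Rightarrow> ('a \<Rightarrow> 'b)
      \<Rightarrow> real \<Rightarrow> 'a \<Rightarrow> 'b \<Rightarrow> real" where
  "augL K f h g c z p = f z + h z
     + (1 / (2 * c)) * ((infdist (p + c *\<^sub>R g z) (uminus ` K))\<^sup>2 - (norm p)\<^sup>2)"

definition gradLt :: "'b::euclidean_space set \<Rightarrow> ('a::real_inner \<Rightarrow> 'a) \<Rightarrow> ('a \<Rightarrow> 'a \<Rightarrow> 'b) \<Rightarrow> ('a \<Rightarrow> 'b)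
      \<Rightarrow> real \<Rightarrow> 'a \<Rightarrow> 'b \<Rightarrow> 'a" where
  "gradLt K gf g' g c z p = gf z + adjoint (g' z) (projK K (p + c *\<^sub>R g z))"

definition prox_hat :: "'a::real_inner set \<Rightarrow> ('a \<Rightarrow> real) \<Rightarrow> real \<Rightarrow> 'a \<Rightarrow> 'a \<Rightarrow> real \<Rightarrow> 'a \<Rightarrow> 'a" where
  "prox_hat H h lam gv r L zk =
     (THE u. u \<in> H \<and> (\<forall>u'\<in>H.
        lam * (gv \<bullet> (u - zk) + h u) - r \<bullet> (u - zk) + L / 2 * (norm (u - zk))\<^sup>2
        \<le> lam * (gv \<bullet> (u' - zk) + h u') - r \<bullet> (u' - zk) + L / 2 * (norm (u' - zk))\<^sup>2))"

end

theory Submission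
  imports Defs
begin

lemma norm_add_sq: "(norm (a + b))\<^sup>2 = (norm a)\<^sup>2 + 2 * (a \<bullet> b) + (norm (b::'a::real_inner))\<^sup>2"
  by (simp add: power2_norm_eq_inner inner_add_left inner_add_right inner_commute)

lemma norm_diff_sq: "(norm (a - b))\<^sup>2 = (norm a)\<^sup>2 - 2 * (a \<bullet> b) + (norm (b::'a::real_inner))\<^sup>2"
  by (simp add: power2_norm_eq_inner inner_diff_left inner_diff_right inner_commute)

lemma ring4: "a + 2 * (b + c) + d = a + 2 * b + 2 * c + (d::real)" by simp

lemma dual_cone_zero: "0 \<in> dual_cone K"
  by (simp add: dual_cone_def)

lemma dual_cone_convex: "convex (dual_cone (K::'b::real_inner set))"
  unfolding dual_cone_def convex_def by (auto simp: inner_add_left)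

lemma dual_cone_closed: "closed (dual_cone (K::'b::real_inner set))"
proof -
  have "dual_cone K = (\<Inter>x\<in>K. {y. y \<bullet> x \<ge> 0})" by (auto simp: dual_cone_def)
  moreover have "closed {y. y \<bullet> x \<ge> (0::real)}" for x :: 'b
    using closed_halfspace_ge[of 0 x] by (simp add: inner_commute)
  ultimately show ?thesis by (auto intro: closed_INT)
qed

lemma dual_cone_cone: "cone (dual_cone (K::'b::real_inner set))"
  unfolding cone_def dual_cone_def by auto

lemma bipolar:
  fixes K :: "'b::euclidean_space set"
  assumes "closed K" "convex K" "cone K" "K \<noteq> {}" "\<forall>a\<in>dual_cone K. a \<bullet> w \<ge> 0"
  shows "w \<in> K"
proof (rule ccontr)
  assume "w \<notin> K"
  then obtain a b where ab: "a \<bullet> w < b" "\<forall>x\<in>K. a \<bullet> x > b"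
    using separating_hyperplane_closed_point[OF assms(2,1)] by blast
  obtain x0 where "x0 \<in> K" using assms(4) by blast
  then have "0 \<in> K" using assms(3) unfolding cone_def by (metis scale_zero_left order_refl)
  then have b0: "b < 0" using ab by auto
  have "a \<bullet> x \<ge> 0" if x: "x \<in> K" for x
  proof (rule ccontr)
    assume neg: "\<not> a \<bullet> x \<ge> 0"
    define t where "t = b / (a \<bullet> x)"
    have t0: "t \<ge> 0" using neg b0 unfolding t_def by (simp add: divide_nonpos_neg)
    have "t *\<^sub>R x \<in> K" using assms(3) x t0 unfolding cone_def by auto
    then have "a \<bullet> (t *\<^sub>R x) > b" using ab by auto
    moreover have "a \<bullet> (t *\<^sub>R x) = b" using neg unfolding t_def by simp
    ultimately show False by simp
  qed
  then have "a \<in> dual_cone K" by (auto simp: dual_cone_def)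
  then have "a \<bullet> w \<ge> 0" using assms(5) by auto
  then show False using ab b0 by simp
qed

lemma moreau:
  fixes K :: "'b::euclidean_space set"
  assumes "closed K" "convex K" "cone K" "K \<noteq> {}"
  shows "projK K y \<in> dual_cone K" "projK K y \<bullet> (projK K y - y) = 0" "projK K y - y \<in> K"
proof -
  let ?C = "dual_cone K" and ?q = "projK K y"
  have ne: "?C \<noteq> {}" using dual_cone_zero by blast
  show qin: "?q \<in> ?C" unfolding projK_def
    by (rule closest_point_in_set[OF dual_cone_closed ne])
  have cl: "\<forall>z\<in>?C. dist y ?q \<le> dist y z"
    unfolding projK_def using closest_point_le[OF dual_cone_closed] by blast
  have dot: "(y - ?q) \<bullet> (x - ?q) \<le> 0" if "x \<in> ?C" for x
    by (rule any_closest_point_dot[OF dual_cone_convex dual_cone_closed qin that cl])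
  have "2 *\<^sub>R ?q \<in> ?C" using qin dual_cone_cone[of K] unfolding cone_def by simp
  from dot[OF this] have a1: "(y - ?q) \<bullet> ?q \<le> 0" by (simp add: algebra_simps scaleR_2)
  from dot[OF dual_cone_zero] have a2: "(y - ?q) \<bullet> ?q \<ge> 0" by (simp add: inner_diff_right inner_diff_left)
  have e: "(y - ?q) \<bullet> ?q = 0" using a1 a2 by simp
  then show "?q \<bullet> (?q - y) = 0" by (simp add: inner_diff_right inner_diff_left inner_commute)
  have "a \<bullet> (?q - y) \<ge> 0" if "a \<in> ?C" for a
  proof -
    have "(y - ?q) \<bullet> (a - ?q) \<le> 0" using dot[OF that] .
    then have "(y - ?q) \<bullet> a \<le> 0" using e by (simp add: inner_diff_right)
    then show ?thesis by (simp add: inner_diff_left inner_diff_right inner_commute)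
  qed
  then show "?q - y \<in> K" using bipolar[OF assms] by blast
qed

lemma infdist_projK:
  fixes K :: "'b::euclidean_space set"
  assumes "closed K" "convex K" "cone K" "K \<noteq> {}"
  shows "infdist y (uminus ` K) = norm (projK K y)"
proof -
  let ?q = "projK K y"
  note m = moreau[OF assms, of y]
  have "y - ?q \<in> uminus ` K" using m(3) by (metis image_eqI minus_diff_eq)
  then have le: "infdist y (uminus ` K) \<le> norm ?q"
    using infdist_le[of "y - ?q" "uminus ` K" y] by (simp add: dist_norm)
  have ge: "norm ?q \<le> dist y w" if wK: "w \<in> uminus ` K" for w
  proof -
    obtain x where x: "x \<in> K" "w = - x" using wK by blast
    have qx: "?q \<bullet> x \<ge> 0" using m(1) x(1) by (auto simp: dual_cone_def)
    have "(dist y w)\<^sup>2 = (norm (?q + ((y - ?q) + x)))\<^sup>2" using x by (simp add: dist_norm algebra_simps)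
    also have "\<dots> = (norm ?q)\<^sup>2 + 2 * (?q \<bullet> (y - ?q)) + 2 * (?q \<bullet> x) + (norm ((y - ?q) + x))\<^sup>2"
      unfolding norm_add_sq[of ?q "(y - ?q) + x"] inner_add_right by (rule ring4)
    finally have eq: "(dist y w)\<^sup>2 = (norm ?q)\<^sup>2 + 2 * (?q \<bullet> (y - ?q)) + 2 * (?q \<bullet> x) + (norm ((y - ?q) + x))\<^sup>2" .
    have z: "?q \<bullet> (y - ?q) = 0" using m(2) by (simp add: inner_diff_right)
    have "0 \<le> (norm ((y - ?q) + x))\<^sup>2" by (rule zero_le_power2)
    then have "(dist y w)\<^sup>2 \<ge> (norm ?q)\<^sup>2" using eq z qx by linarith
    then show ?thesis by (rule power2_le_imp_le) simp
  qed
  have ne: "uminus ` K \<noteq> {}" using assms(4) by simp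
  have "norm ?q \<le> infdist y (uminus ` K)"
    unfolding infdist_notempty[OF ne] by (rule cINF_greatest[OF ne ge])
  with le show ?thesis by simp
qed

lemma augL_q_change:
  fixes K :: "'b::euclidean_space set"
  assumes K: "closed K" "convex K" "cone K" "K \<noteq> {}" and c: "c > 0"
    and q: "q = projK K (p + c *\<^sub>R g z)"
  shows "augL K f h g c z q \<le> augL K f h g c z p + (norm (q - p))\<^sup>2 / c"
proof -
  define y where "y = p + c *\<^sub>R g z"
  have qy: "q = projK K y" using q y_def by simp
  note m = moreau[OF K, of y]
  have d1: "infdist y (uminus ` K) = norm q" using infdist_projK[OF K, of y] qy by simp
  have "y - q \<in> uminus ` K" using m(3) qy by (metis image_eqI minus_diff_eq)
  then have "infdist (q + c *\<^sub>R g z) (uminus ` K) \<le> dist (q + c *\<^sub>R g z) (y - q)" by (rule infdist_le)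
  also have "dist (q + c *\<^sub>R g z) (y - q) = norm (2 *\<^sub>R q - p)"
    unfolding y_def dist_norm by (simp add: algebra_simps scaleR_2)
  finally have d2: "(infdist (q + c *\<^sub>R g z) (uminus ` K))\<^sup>2 \<le> (norm (2 *\<^sub>R q - p))\<^sup>2"
    by (rule power_mono[OF _ infdist_nonneg])
  have e1: "(norm (2 *\<^sub>R q - p))\<^sup>2 = 4 * (norm q)\<^sup>2 - 4 * (q \<bullet> p) + (norm p)\<^sup>2"
    by (simp add: norm_diff_sq power_mult_distrib)
  have e2: "(norm (q - p))\<^sup>2 = (norm q)\<^sup>2 - 2 * (q \<bullet> p) + (norm p)\<^sup>2" by (rule norm_diff_sq)
  have "augL K f h g c z q - augL K f h g c z p
      = (1 / (2 * c)) * ((infdist (q + c *\<^sub>R g z) (uminus ` K))\<^sup>2 - (norm q)\<^sup>2)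
        - (1 / (2 * c)) * ((norm q)\<^sup>2 - (norm p)\<^sup>2)"
    unfolding augL_def d1[unfolded y_def] by simp
  also have "\<dots> \<le> (1 / (2 * c)) * ((norm (2 *\<^sub>R q - p))\<^sup>2 - (norm q)\<^sup>2)
        - (1 / (2 * c)) * ((norm q)\<^sup>2 - (norm p)\<^sup>2)"
  proof -
    have "(1 / (2 * c)) * ((infdist (q + c *\<^sub>R g z) (uminus ` K))\<^sup>2 - (norm q)\<^sup>2)
        \<le> (1 / (2 * c)) * ((norm (2 *\<^sub>R q - p))\<^sup>2 - (norm q)\<^sup>2)"
      using d2 c by (intro mult_left_mono) auto
    then show ?thesis by linarith
  qed
  also have "\<dots> = (norm (q - p))\<^sup>2 / c" unfolding e1 e2 using c by (simp add: field_simps)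
  finally show ?thesis by simp
qed

lemma augL_lower:
  assumes c: "c > 0"
  shows "augL K f h g c z p \<ge> f z + h z - (norm p)\<^sup>2 / (2 * c)"
proof -
  have "(1 / (2 * c)) * ((infdist (p + c *\<^sub>R g z) (uminus ` K))\<^sup>2 - (norm p)\<^sup>2) \<ge> (1 / (2 * c)) * (0 - (norm p)\<^sup>2)"
    using c by (intro mult_left_mono) auto
  then show ?thesis unfolding augL_def by simp
qed

lemma augL_feasible:
  fixes K :: "'b::euclidean_space set"
  assumes K: "cone K" and c: "c > 0" and feas: "- g z \<in> K"
  shows "augL K f h g c z p \<le> f z + h z"
proof -
  have "c *\<^sub>R (- g z) \<in> K" using K feas c unfolding cone_def by auto
  then have "c *\<^sub>R g z \<in> uminus ` K" by (metis image_eqI minus_minus scaleR_minus_right)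
  then have "infdist (p + c *\<^sub>R g z) (uminus ` K) \<le> dist (p + c *\<^sub>R g z) (c *\<^sub>R g z)" by (rule infdist_le)
  then have "infdist (p + c *\<^sub>R g z) (uminus ` K) \<le> norm p" by (simp add: dist_norm)
  then have "(infdist (p + c *\<^sub>R g z) (uminus ` K))\<^sup>2 \<le> (norm p)\<^sup>2"
    by (rule power_mono[OF _ infdist_nonneg])
  then have "(1 / (2 * c)) * ((infdist (p + c *\<^sub>R g z) (uminus ` K))\<^sup>2 - (norm p)\<^sup>2) \<le> 0"
    using c by (intro mult_nonneg_nonpos) auto
  then show ?thesis unfolding augL_def by simp
qed

lemma psi_upper:
  fixes K :: "'b::euclidean_space set"
  assumes K: "closed K" "convex K" "cone K" "K \<noteq> {}" and c: "c > 0"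
    and q: "q = projK K (p + c *\<^sub>R g z)"
  shows "(1 / (2 * c)) * ((infdist (p + c *\<^sub>R g z') (uminus ` K))\<^sup>2 - (norm p)\<^sup>2)
       - (1 / (2 * c)) * ((infdist (p + c *\<^sub>R g z) (uminus ` K))\<^sup>2 - (norm p)\<^sup>2)
       \<le> q \<bullet> (g z' - g z) + c / 2 * (norm (g z' - g z))\<^sup>2"
proof -
  define y where "y = p + c *\<^sub>R g z"
  have qy: "q = projK K y" using q y_def by simp
  note m = moreau[OF K, of y]
  have d1: "infdist y (uminus ` K) = norm q" using infdist_projK[OF K, of y] qy by simp
  have "y - q \<in> uminus ` K" using m(3) qy by (metis image_eqI minus_diff_eq)
  then have "infdist (p + c *\<^sub>R g z') (uminus ` K) \<le> dist (p + c *\<^sub>R g z') (y - q)" by (rule infdist_le)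
  also have "dist (p + c *\<^sub>R g z') (y - q) = norm (q + c *\<^sub>R (g z' - g z))"
    unfolding y_def dist_norm by (simp add: algebra_simps)
  finally have d2: "(infdist (p + c *\<^sub>R g z') (uminus ` K))\<^sup>2 \<le> (norm (q + c *\<^sub>R (g z' - g z)))\<^sup>2"
    by (rule power_mono[OF _ infdist_nonneg])
  have e: "(norm (q + c *\<^sub>R (g z' - g z)))\<^sup>2 = (norm q)\<^sup>2 + 2 * c * (q \<bullet> (g z' - g z)) + c\<^sup>2 * (norm (g z' - g z))\<^sup>2"
    unfolding norm_add_sq by (simp add: power_mult_distrib)
  have "(1 / (2 * c)) * ((infdist (p + c *\<^sub>R g z') (uminus ` K))\<^sup>2 - (norm p)\<^sup>2)
       - (1 / (2 * c)) * ((infdist (p + c *\<^sub>R g z) (uminus ` K))\<^sup>2 - (norm p)\<^sup>2)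
      = (1 / (2 * c)) * ((infdist (p + c *\<^sub>R g z') (uminus ` K))\<^sup>2 - (norm q)\<^sup>2)"
    using d1 unfolding y_def by (simp add: algebra_simps)
  also have "\<dots> \<le> (1 / (2 * c)) * ((norm (q + c *\<^sub>R (g z' - g z)))\<^sup>2 - (norm q)\<^sup>2)"
    using d2 c by (intro mult_left_mono) auto
  also have "\<dots> = q \<bullet> (g z' - g z) + c / 2 * (norm (g z' - g z))\<^sup>2"
    unfolding e using c by (simp add: field_simps power2_eq_square)
  finally show ?thesis .
qed

lemma half_cancel: "(M::real) > 0 \<Longrightarrow> a / (2 * M) * M = a / 2" by (simp add: field_simps)

lemma scalar_opt:
  fixes X L dd R e s2 :: real
  assumes H: "\<And>t. 0 < t \<Longrightarrow> t \<le> 1 \<Longrightarrow> 0 \<le> t * X + t\<^sup>2 * (L * dd\<^sup>2) + e"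
    and L: "L \<ge> 1" and dd: "dd \<ge> 0" and R: "R \<ge> 0" and e: "e \<ge> 0"
    and eL: "2 * e * L \<le> s2 * R\<^sup>2" and s2: "s2 \<le> 1/2" "0 \<le> s2"
  shows "- X \<le> R * dd + s2 * R\<^sup>2 / 2"
proof -
  have e2: "e \<le> s2 * R\<^sup>2 / 2"
  proof -
    have "2 * e \<le> 2 * e * L" using e L by (simp add: mult_le_cancel_left1)
    then show ?thesis using eL by simp
  qed
  have h1: "- X \<le> L * dd\<^sup>2 + e" using H[of 1] by simp
  show ?thesis
  proof (cases "L * dd\<^sup>2 \<le> R * dd / 2")
    case True
    have "R * dd / 2 \<le> R * dd" using R dd by simp
    then show ?thesis using h1 True e2 by linarith
  next
    case False
    then have Ldd: "L * dd\<^sup>2 > R * dd / 2" by simp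
    have dpos: "dd > 0"
    proof (rule ccontr)
      assume "\<not> dd > 0" then have "dd = 0" using dd by simp
      then show False using Ldd by simp
    qed
    show ?thesis
    proof (cases "R = 0")
      case True
      have "e \<le> e * L" using e L by (simp add: mult_le_cancel_left1)
      moreover have "2 * e * L \<le> 0" using eL True by simp
      ultimately have e0: "e = 0" using e mult.commute[of e L] by linarith
      have Lpos: "L * dd\<^sup>2 > 0" using L dpos by simp
      have "- X \<le> 0"
      proof (rule ccontr)
        assume "\<not> - X \<le> 0"
        then have Xn: "- X > 0" by simp
        define t where "t = min 1 (- X / (2 * (L * dd\<^sup>2)))"
        have t0: "0 < t" "t \<le> 1" unfolding t_def using Xn Lpos by (auto intro: divide_neg_pos)
        have "t * (L * dd\<^sup>2) \<le> - X / 2"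
        proof -
          have "t \<le> - X / (2 * (L * dd\<^sup>2))" unfolding t_def by simp
          then have "t * (L * dd\<^sup>2) \<le> - X / (2 * (L * dd\<^sup>2)) * (L * dd\<^sup>2)"
            using Lpos by (intro mult_right_mono) auto
          moreover have "- X / (2 * (L * dd\<^sup>2)) * (L * dd\<^sup>2) = - X / 2" by (rule half_cancel[OF Lpos])
          ultimately show ?thesis by linarith
        qed
        moreover have "0 \<le> t * X + t\<^sup>2 * (L * dd\<^sup>2)" using H[OF t0] e0 by simp
        then have "0 \<le> t * (X + t * (L * dd\<^sup>2))" by (simp add: power2_eq_square algebra_simps)
        then have "0 \<le> X + t * (L * dd\<^sup>2)" using t0 by (simp add: zero_le_mult_iff)
        ultimately show False using Xn by linarith
      qed
      moreover have "0 \<le> R * dd" using R dd by simp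
      moreover have "0 \<le> s2 * R\<^sup>2 / 2" using s2(2) by simp
      ultimately show ?thesis by linarith
    next
      case False
      then have Rpos: "R > 0" using R by simp
      define t where "t = R / (2 * L * dd)"
      have Lpos: "L > 0" using L by simp
      have t0: "0 < t" unfolding t_def using Rpos Lpos dpos by simp
      have "R * dd < 2 * (L * dd\<^sup>2)" using Ldd by simp
      then have "R < 2 * L * dd" using dpos by (simp add: power2_eq_square mult.assoc[symmetric])
      then have t1: "t \<le> 1" unfolding t_def using Lpos dpos by simp
      have Ht: "0 \<le> t * X + t\<^sup>2 * (L * dd\<^sup>2) + e" using H[OF t0 t1] .
      have "0 \<le> X + t * (L * dd\<^sup>2) + e / t"
      proof -
        have "t * (X + t * (L * dd\<^sup>2) + e / t) = t * X + t\<^sup>2 * (L * dd\<^sup>2) + e"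
          using t0 by (simp add: field_simps power2_eq_square)
        then have "0 \<le> t * (X + t * (L * dd\<^sup>2) + e / t)" using Ht by simp
        then show ?thesis using t0 by (simp add: zero_le_mult_iff)
      qed
      moreover have "t * (L * dd\<^sup>2) = R * dd / 2"
        unfolding t_def using Lpos dpos by (simp add: field_simps power2_eq_square)
      moreover have "e / t \<le> R * dd / 2"
      proof -
        have "e / t = e * (2 * L * dd) / R" unfolding t_def using Rpos Lpos dpos by (simp add: field_simps)
        also have "\<dots> = (2 * e * L) * dd / R" by simp
        also have "\<dots> \<le> (s2 * R\<^sup>2) * dd / R" using eL dd Rpos by (simp add: divide_right_mono mult_right_mono)
        also have "\<dots> = s2 * R * dd" using Rpos by (simp add: power2_eq_square)
        also have "\<dots> \<le> R * dd / 2"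
        proof -
          have "s2 * (R * dd) \<le> (1/2) * (R * dd)" using s2(1) Rpos dd by (intro mult_right_mono) auto
          then show ?thesis by (simp add: mult.assoc)
        qed
        finally show ?thesis .
      qed
      ultimately have "- X \<le> R * dd" by linarith
      moreover have "0 \<le> s2 * R\<^sup>2 / 2" using s2(2) by simp
      ultimately show ?thesis by linarith
    qed
  qed
qed

lemma iter_descent:
  fixes sigma :: real
  assumes sub: "v \<in> eps_subdiff H (\<lambda>u. lam * augL K f h g c u p + 1 / 2 * (norm (u - z0))\<^sup>2) e z"
    and z0: "z0 \<in> H"
    and err: "(norm v)\<^sup>2 + 2 * e \<le> s2 * (norm (v + z0 - z))\<^sup>2" and s2: "s2 \<le> sigma\<^sup>2"
  shows "lam * (augL K f h g c z0 p - augL K f h g c z p) \<ge> (1 - sigma\<^sup>2) / 2 * (norm (v + z0 - z))\<^sup>2"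
proof -
  have ineq: "lam * augL K f h g c z0 p + 1 / 2 * (norm (z0 - z0))\<^sup>2
      \<ge> lam * augL K f h g c z p + 1 / 2 * (norm (z - z0))\<^sup>2 + v \<bullet> (z0 - z) - e"
    using sub z0 unfolding eps_subdiff_def by blast
  define u where "u = z - z0"
  define R2 where "R2 = (norm (v + z0 - z))\<^sup>2"
  have r: "v + z0 - z = v - u" unfolding u_def by (simp add: algebra_simps)
  have e1: "R2 = (norm v)\<^sup>2 - 2 * (v \<bullet> u) + (norm u)\<^sup>2" unfolding R2_def r by (rule norm_diff_sq)
  have e2: "v \<bullet> (z0 - z) = - (v \<bullet> u)" unfolding u_def by (simp add: inner_diff_right)
  have ineq': "lam * augL K f h g c z p + (norm u)\<^sup>2 / 2 - v \<bullet> u - e \<le> lam * augL K f h g c z0 p"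
    using ineq unfolding e2 u_def by simp
  have m1: "s2 * R2 \<le> sigma\<^sup>2 * R2" using s2 unfolding R2_def by (intro mult_right_mono) auto
  have m2: "(1 - sigma\<^sup>2) / 2 * R2 = R2 / 2 - sigma\<^sup>2 * R2 / 2" by (simp add: field_simps)
  have m3: "lam * (augL K f h g c z0 p - augL K f h g c z p) = lam * augL K f h g c z0 p - lam * augL K f h g c z p"
    by (simp add: algebra_simps)
  have err': "(norm v)\<^sup>2 + 2 * e \<le> s2 * R2" using err unfolding R2_def .
  have "(1 - sigma\<^sup>2) / 2 * R2 \<le> lam * (augL K f h g c z0 p - augL K f h g c z p)"
    unfolding m2 m3 using ineq' err' e1 m1 by linarith
  then show ?thesis unfolding R2_def .
qed

lemma iter_upper:
  assumes sub: "v \<in> eps_subdiff H (\<lambda>u. lam * augL K f h g c u p + 1 / 2 * (norm (u - z0))\<^sup>2) e z"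
    and zs: "zs \<in> H"
    and err: "(norm v)\<^sup>2 + 2 * e \<le> s2 * (norm (v + z0 - z))\<^sup>2" and s2: "s2 \<le> 1/2" and e: "e \<ge> 0"
  shows "lam * augL K f h g c z p \<le> lam * augL K f h g c zs p + (norm (zs - z0))\<^sup>2"
proof -
  have ineq: "lam * augL K f h g c zs p + 1 / 2 * (norm (zs - z0))\<^sup>2
      \<ge> lam * augL K f h g c z p + 1 / 2 * (norm (z - z0))\<^sup>2 + v \<bullet> (zs - z) - e"
    using sub zs unfolding eps_subdiff_def by blast
  define u where "u = z - z0"
  define w where "w = zs - z0"
  have r: "v + z0 - z = v - u" unfolding u_def by (simp add: algebra_simps)
  have e1: "(norm (v - u))\<^sup>2 = (norm v)\<^sup>2 - 2 * (v \<bullet> u) + (norm u)\<^sup>2" by (rule norm_diff_sq)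
  have e2: "v \<bullet> (zs - z) = v \<bullet> w - v \<bullet> u" unfolding u_def w_def by (simp add: inner_diff_right)
  have cs: "- (v \<bullet> w) \<le> norm v * norm w" using norm_cauchy_schwarz[of "- v" w] by simp
  have am: "norm v * norm w \<le> (norm w)\<^sup>2 / 2 + (norm v)\<^sup>2 / 2"
    using sum_squares_bound[of "norm v" "norm w"] by (simp add: power2_eq_square algebra_simps)
  have vv: "(norm v)\<^sup>2 \<le> s2 * (norm (v - u))\<^sup>2" using err e r by simp
  have "s2 * (norm (v - u))\<^sup>2 \<le> (1 - s2) * (norm (v - u))\<^sup>2" using s2 by (intro mult_right_mono) auto
  moreover have "norm (z - z0) = norm u" by (simp add: u_def)
  moreover have "norm (zs - z0) = norm w" by (simp add: w_def)
  moreover have "(1 - s2) * (norm (v - u))\<^sup>2 = (norm (v - u))\<^sup>2 - s2 * (norm (v - u))\<^sup>2"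
    by (simp add: algebra_simps)
  ultimately show ?thesis using ineq err e1 e2 cs am vv unfolding r by (simp only:)
qed

lemma iter_pbound:
  fixes K :: "'b::euclidean_space set" and H :: "'a::euclidean_space set"
    and f h :: "'a \<Rightarrow> real" and gf :: "'a \<Rightarrow> 'a" and g :: "'a \<Rightarrow> 'b" and g' :: "'a \<Rightarrow> 'a \<Rightarrow> 'b"
    and sigma lam c e m tau Lp Lf Lg Bg0 Bg1 Bf1 Kh Dh :: real
  assumes K: "closed K" "convex K" "cone K" "K \<noteq> {}"
    and c: "c > 0" and lam: "lam > 0"
    and Hc: "convex H" and zH: "z \<in> H" and z0H: "z0 \<in> H"
    and mpos: "0 < m" "m \<le> 1" and ballH: "\<And>y. norm (y - zbar) \<le> m \<Longrightarrow> y \<in> H"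
    and sub: "v \<in> eps_subdiff H (\<lambda>u. lam * augL K f h g c u p + 1 / 2 * (norm (u - z0))\<^sup>2) e z"
    and e: "e \<ge> 0"
    and err: "(norm v)\<^sup>2 + 2 * e \<le> sigma\<^sup>2 / Lp * (norm (v + z0 - z))\<^sup>2"
    and Lp: "Lp = lam * (Lf + Lg * norm p + c * (Bg0 * Lg + Bg1\<^sup>2)) + 1" "Lp \<ge> 1"
    and sig: "0 < sigma" "sigma\<^sup>2 \<le> 1/2" "sigma < 1"
    and gfb: "\<forall>x\<in>H. norm (gf x) \<le> Bf1" and g0b: "\<forall>x\<in>H. norm (g x) \<le> Bg0"
    and g1b: "\<forall>x\<in>H. \<forall>y\<in>H. norm (g x - g y) \<le> Bg1 * norm (x - y)"
    and ftay: "\<forall>x\<in>H. \<forall>y\<in>H. f y - f x - gf x \<bullet> (y - x) \<le> Lf * (norm (y - x))\<^sup>2"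
    and gtay: "\<forall>x y. norm (g y - g x - g' x (y - x)) \<le> Lg * (norm (y - x))\<^sup>2"
    and glin: "\<forall>x. linear (g' x)"
    and ggrad: "\<forall>x y. \<forall>q\<in>dual_cone K. q \<bullet> g' x (y - x) \<le> q \<bullet> g y - q \<bullet> g x"
    and hconv: "convex_on H h" and hlip: "\<forall>x\<in>H. \<forall>y\<in>H. \<bar>h x - h y\<bar> \<le> Kh * dist x y"
    and feas: "- g zbar \<in> K" and tau: "tau > 0"
    and reg: "\<forall>x\<in>H. \<forall>q\<in>dual_cone K. max (norm (adjoint (g' x) q)) \<bar>q \<bullet> g zbar\<bar> \<ge> tau * norm q"
    and diam: "\<forall>x\<in>H. \<forall>y\<in>H. norm (x - y) \<le> Dh"
    and nn: "Lg \<ge> 0" "Kh + Bf1 \<ge> 0" "Lf \<ge> 0"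
  shows "norm (projK K (p + c *\<^sub>R g z)) \<le> max (norm p)
     ((2 * (Kh + Bf1) * Dh + (sigma\<^sup>2 / (2 * (1 - sigma)\<^sup>2) + 2 * ((1 + sigma) / (1 - sigma))) * Dh\<^sup>2 / lam)
       / (m * tau))"
proof -
  define kap where "kap = 2 * (Kh + Bf1) * Dh + (sigma\<^sup>2 / (2 * (1 - sigma)\<^sup>2) + 2 * ((1 + sigma) / (1 - sigma))) * Dh\<^sup>2 / lam"
  define y0 where "y0 = p + c *\<^sub>R g z"
  define q where "q = projK K y0"
  have qK: "q \<in> dual_cone K" unfolding q_def by (rule moreau(1)[OF K])
  have qc: "q \<bullet> (q - y0) = 0" unfolding q_def by (rule moreau(2)[OF K])
  have zbarH: "zbar \<in> H" using ballH[of zbar] mpos by simp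
  have "norm q \<le> max (norm p) (kap / (m * tau))"
  proof (cases "norm q \<le> norm p")
    case True then show ?thesis by simp
  next
    case False
    then have nq: "norm q > norm p" by simp
    have qy: "q \<bullet> q = q \<bullet> y0" using qc by (simp add: inner_diff_right)
    have qg: "c * (q \<bullet> g z) = (norm q)\<^sup>2 - q \<bullet> p"
      using qy unfolding y0_def by (simp add: inner_add_right power2_norm_eq_inner)
    have csp: "q \<bullet> p \<le> norm q * norm p" using norm_cauchy_schwarz by blast
    have "norm q * norm p \<le> norm q * norm q" using nq by (intro mult_left_mono) auto
    then have "c * (q \<bullet> g z) \<ge> 0" using qg csp by (simp add: power2_eq_square)
    then have qgz: "q \<bullet> g z \<ge> 0" using c by (simp add: zero_le_mult_iff)
    have qgbar: "q \<bullet> g zbar \<le> 0" using qK feas unfolding dual_cone_def by force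
    have qnorm: "norm q \<le> norm p + c * Bg0"
    proof -
      have "norm q * norm q \<le> norm q * norm y0"
        using qy norm_cauchy_schwarz[of q y0] by (simp add: power2_norm_eq_inner[symmetric] power2_eq_square)
      moreover have "q \<noteq> 0" using nq norm_ge_zero[of p] by auto
      ultimately have "norm q \<le> norm y0" by (simp add: mult_le_cancel_left)
      also have "norm y0 \<le> norm p + norm (c *\<^sub>R g z)" unfolding y0_def by (rule norm_triangle_ineq)
      also have "norm (c *\<^sub>R g z) \<le> c * Bg0" using g0b zH c by (simp add: mult_left_mono)
      finally show ?thesis by simp
    qed
    have qpos: "norm q > 0" using nq norm_ge_zero[of p] by linarith
    obtain y where yH: "y \<in> H" and ydir: "q \<bullet> g' z (y - z) \<le> - (m * tau * norm q)"
    proof -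
      have gz: "q \<bullet> g' z (zbar - z) \<le> q \<bullet> g zbar - q \<bullet> g z" using ggrad qK by blast
      have tq: "m * (tau * norm q) \<le> 1 * (tau * norm q)" using mpos tau by (intro mult_right_mono) auto
      have "max (norm (adjoint (g' z) q)) \<bar>q \<bullet> g zbar\<bar> \<ge> tau * norm q" using reg zH qK by blast
      then consider "norm (adjoint (g' z) q) \<ge> tau * norm q" | "\<bar>q \<bullet> g zbar\<bar> \<ge> tau * norm q"
        by (auto simp: max_def split: if_splits)
      then show ?thesis
      proof cases
        case 1
        define a where "a = adjoint (g' z) q"
        have apos: "norm a > 0" using 1 tau qpos unfolding a_def
          by (smt (verit) mult_pos_pos)
        define u where "u = - (1 / norm a) *\<^sub>R a"
        define y where "y = zbar + m *\<^sub>R u"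
        have nu: "norm u = 1" unfolding u_def using apos by simp
        have yH: "y \<in> H" using ballH[of y] nu mpos unfolding y_def by simp
        have lin: "linear (g' z)" using glin by blast
        have yz: "y - z = (zbar - z) + m *\<^sub>R u" unfolding y_def by (simp add: algebra_simps)
        have "q \<bullet> g' z (y - z) = q \<bullet> g' z (zbar - z) + m * (q \<bullet> g' z u)"
          unfolding yz linear_add[OF lin] linear_scale[OF lin] by (simp add: inner_add_right)
        also have "q \<bullet> g' z u = u \<bullet> a"
          unfolding a_def adjoint_works[OF lin] by (simp add: inner_commute)
        also have "u \<bullet> a = - norm a" unfolding u_def using apos
          by (simp add: power2_norm_eq_inner[symmetric] power2_eq_square)
        finally have "q \<bullet> g' z (y - z) = q \<bullet> g' z (zbar - z) - m * norm a" by simp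
        moreover have "m * (tau * norm q) \<le> m * norm a" using 1 mpos unfolding a_def by (intro mult_left_mono) auto
        ultimately have "q \<bullet> g' z (y - z) \<le> - (m * tau * norm q)" using gz qgz qgbar by (simp add: mult.assoc)
        then show ?thesis using that yH by blast
      next
        case 2
        have "q \<bullet> g' z (zbar - z) \<le> - (m * tau * norm q)" using gz qgz qgbar 2 tq by (simp add: mult.assoc)
        then show ?thesis using that zbarH by blast
      qed
    qed
    define d where "d = y - z"
    define r where "r = v + z0 - z"
    define dd where "dd = norm d"
    have ddD: "dd \<le> Dh" using diam yH zH unfolding dd_def d_def by blast
    have dd0: "dd \<ge> 0" unfolding dd_def by simp
    have dirq: "q \<bullet> g' z d \<le> - (m * tau * norm q)" using ydir unfolding d_def .
    define X where "X = lam * (Kh + Bf1) * dd - lam * (m * tau * norm q) + norm r * dd"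
    have key: "0 \<le> t * X + t\<^sup>2 * (Lp * dd\<^sup>2) + e" if t: "0 < t" "t \<le> 1" for t
    proof -
      define z' where "z' = z + t *\<^sub>R d"
      have z'eq: "z' = (1 - t) *\<^sub>R z + t *\<^sub>R y" unfolding z'_def d_def by (simp add: algebra_simps)
      have z'H: "z' \<in> H" unfolding z'eq using convexD[OF Hc zH yH, of "1 - t" t] t by simp
      have z'z: "z' - z = t *\<^sub>R d" unfolding z'_def by simp
      have nz'z: "(norm (z' - z))\<^sup>2 = t\<^sup>2 * dd\<^sup>2" unfolding z'z dd_def using t by (simp add: power_mult_distrib)
      have sg: "lam * augL K f h g c z' p + 1 / 2 * (norm (z' - z0))\<^sup>2
          \<ge> lam * augL K f h g c z p + 1 / 2 * (norm (z - z0))\<^sup>2 + v \<bullet> (z' - z) - e"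
        using sub z'H unfolding eps_subdiff_def by blast
      have vz: "v \<bullet> (z' - z) = t * (v \<bullet> d)" unfolding z'z by simp
      have fb: "f z' - f z \<le> t * (Bf1 * dd) + t\<^sup>2 * (Lf * dd\<^sup>2)"
      proof -
        have "f z' - f z - gf z \<bullet> (z' - z) \<le> Lf * (norm (z' - z))\<^sup>2" using ftay zH z'H by blast
        moreover have "gf z \<bullet> (z' - z) = t * (gf z \<bullet> d)" unfolding z'z by simp
        moreover have "gf z \<bullet> d \<le> Bf1 * dd"
        proof -
          have "gf z \<bullet> d \<le> norm (gf z) * norm d" by (rule norm_cauchy_schwarz)
          also have "\<dots> \<le> Bf1 * norm d" using gfb zH by (intro mult_right_mono) auto
          finally show ?thesis unfolding dd_def .
        qed
        then have "t * (gf z \<bullet> d) \<le> t * (Bf1 * dd)" using t by (intro mult_left_mono) auto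
        moreover have "Lf * (norm (z' - z))\<^sup>2 = t\<^sup>2 * (Lf * dd\<^sup>2)" unfolding nz'z by simp
        ultimately show ?thesis by linarith
      qed
      have hb: "h z' - h z \<le> t * (Kh * dd)"
      proof -
        have "h z' \<le> (1 - t) * h z + t * h y" unfolding z'eq using convex_onD[OF hconv, of t z y] t zH yH by simp
        moreover have "h y - h z \<le> Kh * dd" using hlip yH zH unfolding dd_def d_def dist_norm by force
        then have "t * (h y - h z) \<le> t * (Kh * dd)" using t by (intro mult_left_mono) auto
        ultimately show ?thesis by (simp add: algebra_simps)
      qed
      have pb: "(1 / (2 * c)) * ((infdist (p + c *\<^sub>R g z') (uminus ` K))\<^sup>2 - (norm p)\<^sup>2)
         - (1 / (2 * c)) * ((infdist (p + c *\<^sub>R g z) (uminus ` K))\<^sup>2 - (norm p)\<^sup>2)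
         \<le> q \<bullet> (g z' - g z) + c / 2 * (norm (g z' - g z))\<^sup>2"
        by (rule psi_upper[OF K c]) (simp add: q_def y0_def)
      have qdg: "q \<bullet> (g z' - g z) \<le> t * (q \<bullet> g' z d) + t\<^sup>2 * (norm q * Lg * dd\<^sup>2)"
      proof -
        have lin: "linear (g' z)" using glin by blast
        have gl: "g' z (z' - z) = t *\<^sub>R g' z d" unfolding z'z linear_scale[OF lin] ..
        have n1: "norm (g z' - g z - g' z (z' - z)) \<le> Lg * (norm (z' - z))\<^sup>2" using gtay by blast
        have "q \<bullet> (g z' - g z - g' z (z' - z)) \<le> norm q * norm (g z' - g z - g' z (z' - z))"
          by (rule norm_cauchy_schwarz)
        also have "\<dots> \<le> norm q * (Lg * (norm (z' - z))\<^sup>2)" using n1 by (intro mult_left_mono) auto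
        finally have "q \<bullet> (g z' - g z) - t * (q \<bullet> g' z d) \<le> norm q * (Lg * (t\<^sup>2 * dd\<^sup>2))"
          unfolding nz'z gl by (simp add: inner_diff_right)
        then show ?thesis by (simp add: algebra_simps)
      qed
      have gdg: "c / 2 * (norm (g z' - g z))\<^sup>2 \<le> t\<^sup>2 * (c * Bg1\<^sup>2 * dd\<^sup>2)"
      proof -
        have "norm (g z' - g z) \<le> Bg1 * norm (z' - z)" using g1b z'H zH by blast
        also have "norm (z' - z) = t * dd" unfolding z'z dd_def using t by simp
        finally have "(norm (g z' - g z))\<^sup>2 \<le> (Bg1 * (t * dd))\<^sup>2" by (rule power_mono) simp
        then have "(norm (g z' - g z))\<^sup>2 \<le> t\<^sup>2 * (Bg1\<^sup>2 * dd\<^sup>2)" by (simp add: power_mult_distrib algebra_simps)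
        then have "c / 2 * (norm (g z' - g z))\<^sup>2 \<le> c / 2 * (t\<^sup>2 * (Bg1\<^sup>2 * dd\<^sup>2))" using c by (intro mult_left_mono) auto
        moreover have "c / 2 * (t\<^sup>2 * (Bg1\<^sup>2 * dd\<^sup>2)) \<le> t\<^sup>2 * (c * Bg1\<^sup>2 * dd\<^sup>2)"
          using c by (simp add: algebra_simps)
        ultimately show ?thesis by linarith
      qed
      have quad: "1 / 2 * (norm (z' - z0))\<^sup>2 - 1 / 2 * (norm (z - z0))\<^sup>2 = t * ((z - z0) \<bullet> d) + t\<^sup>2 * (dd\<^sup>2 / 2)"
      proof -
        have ez: "z' - z0 = (z - z0) + t *\<^sub>R d" unfolding z'_def by (simp add: algebra_simps)
        have "(norm (z' - z0))\<^sup>2 = (norm (z - z0))\<^sup>2 + 2 * (t * ((z - z0) \<bullet> d)) + t\<^sup>2 * dd\<^sup>2"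
          unfolding ez norm_add_sq[of "z - z0" "t *\<^sub>R d"] dd_def by (simp add: power_mult_distrib)
        then show ?thesis by (simp add: algebra_simps)
      qed
      have rd: "(z - z0) \<bullet> d - v \<bullet> d \<le> norm r * dd"
      proof -
        have "(z - z0) \<bullet> d - v \<bullet> d = - (r \<bullet> d)" unfolding r_def by (simp add: inner_diff_left inner_add_left)
        also have "\<dots> \<le> norm r * norm d" using norm_cauchy_schwarz[of "- r" d] by simp
        finally show ?thesis unfolding dd_def .
      qed
      have augdiff: "augL K f h g c z' p - augL K f h g c z p = (f z' - f z) + (h z' - h z)
         + ((1 / (2 * c)) * ((infdist (p + c *\<^sub>R g z') (uminus ` K))\<^sup>2 - (norm p)\<^sup>2)
         - (1 / (2 * c)) * ((infdist (p + c *\<^sub>R g z) (uminus ` K))\<^sup>2 - (norm p)\<^sup>2))"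
        unfolding augL_def by simp
      have A: "augL K f h g c z' p - augL K f h g c z p \<le> t * (Bf1 * dd) + t * (Kh * dd) + t * (q \<bullet> g' z d)
          + t\<^sup>2 * (Lf * dd\<^sup>2) + t\<^sup>2 * (norm q * Lg * dd\<^sup>2) + t\<^sup>2 * (c * Bg1\<^sup>2 * dd\<^sup>2)"
        using augdiff fb hb pb qdg gdg by linarith
      then have A': "lam * (augL K f h g c z' p - augL K f h g c z p) \<le> lam * (t * (Bf1 * dd) + t * (Kh * dd) + t * (q \<bullet> g' z d)
          + t\<^sup>2 * (Lf * dd\<^sup>2) + t\<^sup>2 * (norm q * Lg * dd\<^sup>2) + t\<^sup>2 * (c * Bg1\<^sup>2 * dd\<^sup>2))"
        using lam by (intro mult_left_mono) auto
      define P1 where "P1 = lam * (Bf1 * dd) + lam * (Kh * dd) + lam * (q \<bullet> g' z d) + ((z - z0) \<bullet> d - v \<bullet> d)"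
      define P2 where "P2 = lam * (Lf * dd\<^sup>2) + lam * (norm q * Lg * dd\<^sup>2) + lam * (c * Bg1\<^sup>2 * dd\<^sup>2) + dd\<^sup>2 / 2"
      have ident: "lam * (t * (Bf1 * dd) + t * (Kh * dd) + t * (q \<bullet> g' z d)
          + t\<^sup>2 * (Lf * dd\<^sup>2) + t\<^sup>2 * (norm q * Lg * dd\<^sup>2) + t\<^sup>2 * (c * Bg1\<^sup>2 * dd\<^sup>2))
          + (t * ((z - z0) \<bullet> d) + t\<^sup>2 * (dd\<^sup>2 / 2)) - t * (v \<bullet> d) = t * P1 + t\<^sup>2 * P2"
        unfolding P1_def P2_def by (simp add: algebra_simps)
      have P1b: "P1 \<le> X"
      proof -
        have "lam * (q \<bullet> g' z d) \<le> lam * (- (m * tau * norm q))" using dirq lam by (intro mult_left_mono) auto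
        then show ?thesis unfolding P1_def X_def using rd by (simp add: algebra_simps)
      qed
      have P2b: "P2 \<le> Lp * dd\<^sup>2"
      proof -
        have "norm q * Lg * dd\<^sup>2 \<le> (norm p + c * Bg0) * Lg * dd\<^sup>2"
          using qnorm nn by (intro mult_right_mono) auto
        then have "lam * (norm q * Lg * dd\<^sup>2) \<le> lam * ((norm p + c * Bg0) * Lg * dd\<^sup>2)"
          using lam by (intro mult_left_mono) auto
        moreover have "Lp * dd\<^sup>2 = lam * (Lf * dd\<^sup>2) + lam * ((norm p + c * Bg0) * Lg * dd\<^sup>2)
            + lam * (c * Bg1\<^sup>2 * dd\<^sup>2) + dd\<^sup>2" unfolding Lp(1) by (simp add: algebra_simps)
        moreover have "0 \<le> lam * (c * Bg1\<^sup>2 * dd\<^sup>2)" using lam c by simp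
        moreover have "0 \<le> dd\<^sup>2" by simp
        ultimately show ?thesis unfolding P2_def by linarith
      qed
      have "t * P1 \<le> t * X" using P1b t by (intro mult_left_mono) auto
      moreover have "t\<^sup>2 * P2 \<le> t\<^sup>2 * (Lp * dd\<^sup>2)" using P2b by (intro mult_left_mono) auto
      moreover have "0 \<le> lam * (augL K f h g c z' p - augL K f h g c z p)
          + (1 / 2 * (norm (z' - z0))\<^sup>2 - 1 / 2 * (norm (z - z0))\<^sup>2) - t * (v \<bullet> d) + e"
        using sg vz by (simp add: algebra_simps)
      ultimately show ?thesis using A' ident quad by linarith
    qed
    have Lpos: "Lp > 0" using Lp(2) by simp
    have R2: "(norm v)\<^sup>2 + 2 * e \<le> sigma\<^sup>2 / Lp * (norm r)\<^sup>2" using err unfolding r_def .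
    have eL: "2 * e * Lp \<le> sigma\<^sup>2 * (norm r)\<^sup>2"
    proof -
      have "2 * e \<le> sigma\<^sup>2 / Lp * (norm r)\<^sup>2" using R2 zero_le_power2[of "norm v"] by linarith
      then have "2 * e * Lp \<le> sigma\<^sup>2 / Lp * (norm r)\<^sup>2 * Lp" using Lpos by (intro mult_right_mono) auto
      then show ?thesis using Lpos by simp
    qed
    have so: "- X \<le> norm r * dd + sigma\<^sup>2 * (norm r)\<^sup>2 / 2"
      by (rule scalar_opt[OF key Lp(2) dd0 norm_ge_zero e eL sig(2) zero_le_power2])
    have nv: "norm v \<le> sigma * norm r"
    proof -
      have "sigma\<^sup>2 / Lp * (norm r)\<^sup>2 \<le> sigma\<^sup>2 * (norm r)\<^sup>2"
      proof -
        have "sigma\<^sup>2 / Lp \<le> sigma\<^sup>2 / 1" using Lp(2) by (intro divide_left_mono) auto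
        then show ?thesis by (intro mult_right_mono) auto
      qed
      moreover have "(sigma * norm r)\<^sup>2 = sigma\<^sup>2 * (norm r)\<^sup>2" by (rule power_mult_distrib)
      ultimately have "(norm v)\<^sup>2 \<le> (sigma * norm r)\<^sup>2" using R2 e by linarith
      moreover have "0 \<le> sigma * norm r" using sig by simp
      ultimately show ?thesis by (rule power2_le_imp_le)
    qed
    have nr: "norm r * (1 - sigma) \<le> Dh"
    proof -
      have re: "r = v + (z0 - z)" unfolding r_def by (simp add: algebra_simps)
      have "norm r \<le> norm v + norm (z0 - z)" unfolding re by (rule norm_triangle_ineq)
      moreover have "norm (z0 - z) \<le> Dh" using diam z0H zH by blast
      moreover have "norm r * (1 - sigma) = norm r - sigma * norm r" by (simp add: algebra_simps)
      ultimately show ?thesis using nv by linarith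
    qed
    define W where "W = Dh / (1 - sigma)"
    have s1: "1 - sigma > 0" using sig by simp
    have rW: "norm r \<le> W" unfolding W_def using nr s1 by (simp add: le_divide_eq)
    have W0: "W \<ge> 0" using rW norm_ge_zero[of r] by linarith
    have Dh0: "Dh \<ge> 0" using diam zH by force
    have "lam * (m * tau * norm q) \<le> lam * (Kh + Bf1) * dd + 2 * (norm r * dd) + sigma\<^sup>2 * (norm r)\<^sup>2 / 2"
      using so unfolding X_def by linarith
    also have "\<dots> \<le> lam * (Kh + Bf1) * Dh + 2 * (W * Dh) + sigma\<^sup>2 * W\<^sup>2 / 2"
    proof -
      have "lam * (Kh + Bf1) * dd \<le> lam * (Kh + Bf1) * Dh" using ddD lam nn by (intro mult_left_mono) auto
      moreover have "norm r * dd \<le> W * Dh" using rW ddD dd0 W0 by (intro mult_mono) auto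
      moreover have "sigma\<^sup>2 * (norm r)\<^sup>2 \<le> sigma\<^sup>2 * W\<^sup>2" using rW by (intro mult_left_mono power_mono) auto
      ultimately show ?thesis by linarith
    qed
    also have "\<dots> \<le> lam * kap"
    proof -
      have e1: "lam * kap = 2 * (lam * (Kh + Bf1) * Dh) + sigma\<^sup>2 * W\<^sup>2 / 2 + 2 * (1 + sigma) * (W * Dh)"
        unfolding kap_def W_def using lam s1 by (simp add: field_simps power2_eq_square)
      have "0 \<le> lam * (Kh + Bf1) * Dh" using lam nn Dh0 by simp
      moreover have "0 \<le> W * Dh" unfolding W_def using s1 Dh0 by simp
      moreover have "2 * (W * Dh) \<le> 2 * (1 + sigma) * (W * Dh)" using calculation(2) sig by (simp add: mult_right_mono)
      ultimately show ?thesis unfolding e1 by linarith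
    qed
    finally have "lam * (m * tau * norm q) \<le> lam * kap" .
    then have "m * tau * norm q \<le> kap" using lam by simp
    then have "norm q * (m * tau) \<le> kap" by (simp add: algebra_simps)
    then have "norm q \<le> kap / (m * tau)" using pos_le_divide_eq[of "m * tau" "norm q" kap] mpos tau by simp
    then show ?thesis by simp
  qed
  then show ?thesis unfolding q_def y0_def kap_def .
qed

lemma cycle_lemma:
  fixes c :: "nat \<Rightarrow> real" and N k l kprev :: nat
  assumes c1: "c 1 > 0"
    and st: "\<And>j. j \<in> {1..N} \<Longrightarrow> c (j + 1) = c j \<or> c (j + 1) = 2 * c j"
    and l: "l \<ge> 1" and kN: "k \<in> {1..N}" and kc: "c k = 2 ^ (l - 1) * c 1"
    and kprev: "kprev = (if l = 1 then 0 else Max {j\<in>{1..N}. c j = 2 ^ (l - 2) * c 1})"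
    and kge: "k \<ge> kprev + 2"
  shows "\<And>j. kprev + 1 \<le> j \<Longrightarrow> j \<le> k \<Longrightarrow> c j = 2 ^ (l - 1) * c 1"
    and "\<And>j. 1 \<le> j \<Longrightarrow> j \<le> N + 1 \<Longrightarrow> c j > 0"
proof -
  have cpow: "1 \<le> j \<Longrightarrow> j \<le> N + 1 \<Longrightarrow> (\<exists>m::nat. c j = 2 ^ m * c 1)" for j
  proof (induction j)
    case 0 then show ?case by simp
  next
    case (Suc j)
    show ?case
    proof (cases "j = 0")
      case True then show ?thesis by (intro exI[of _ 0]) simp
    next
      case False
      then have j: "j \<in> {1..N}" using Suc.prems by auto
      then obtain m where m: "c j = 2 ^ m * c 1" using Suc.IH by auto
      from st[OF j] show ?thesis
      proof
        assume "c (j + 1) = c j" then show ?thesis using m by auto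
      next
        assume "c (j + 1) = 2 * c j" then show ?thesis using m by (intro exI[of _ "Suc m"]) simp
      qed
    qed
  qed
  show cpos: "\<And>j. 1 \<le> j \<Longrightarrow> j \<le> N + 1 \<Longrightarrow> c j > 0"
    using cpow c1 by fastforce
  have cm1: "j \<in> {1..N} \<Longrightarrow> c j \<le> c (j + 1)" for j
    using st[of j] cpos[of j] by auto
  have cmono: "c i \<le> c j" if i1: "1 \<le> i" and ij: "i \<le> j" and jN: "j \<le> N + 1" for i j
    using ij jN
  proof (induction j rule: dec_induct)
    case base then show ?case by simp
  next
    case (step n)
    then have "c n \<le> c (n + 1)" using cm1[of n] i1 by auto
    then show ?case using step by simp
  qed
  have kN': "1 \<le> k" "k \<le> N" using kN by auto
  fix j assume j1: "kprev + 1 \<le> j" and j2: "j \<le> k"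
  show "c j = 2 ^ (l - 1) * c 1"
  proof (cases "l = 1")
    case True
    then have "kprev = 0" using kprev by simp
    then have "c 1 \<le> c j" "c j \<le> c k" using cmono[of 1 j] cmono[of j k] j1 j2 kN' by auto
    then show ?thesis using kc True by simp
  next
    case False
    then have l2: "l \<ge> 2" using l by simp
    define S where "S = {j\<in>{1..N}. c j = 2 ^ (l - 2) * c 1}"
    have kpS: "kprev = Max S" using kprev False unfolding S_def by simp
    have finS: "finite S" unfolding S_def by simp
    define T where "T = {j\<in>{1..k}. c j \<le> 2 ^ (l - 2) * c 1}"
    have "1 \<in> T" unfolding T_def using kN' c1 by (simp add: one_le_power)
    then have Tne: "T \<noteq> {}" by blast
    have finT: "finite T" unfolding T_def by simp
    define J where "J = Max T"
    have JT: "J \<in> T" unfolding J_def using Max_in[OF finT Tne] .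
    have lsuc: "l - 1 = Suc (l - 2)" using l2 by simp
    have pw: "(2::real) ^ (l - 1) = 2 * 2 ^ (l - 2)" unfolding lsuc by (rule power_Suc)
    have Jk: "J < k"
    proof (rule ccontr)
      assume "\<not> J < k" then have "J = k" using JT unfolding T_def by auto
      then have "c k \<le> 2 ^ (l - 2) * c 1" using JT unfolding T_def by auto
      then show False using kc pw c1 by simp
    qed
    have J1: "1 \<le> J" "J \<le> N" using JT kN' Jk unfolding T_def by auto
    have "J + 1 \<notin> T"
    proof
      assume "J + 1 \<in> T" then have "J + 1 \<le> J" unfolding J_def using Max_ge[OF finT] by blast
      then show False by simp
    qed
    then have cJ1: "c (J + 1) > 2 ^ (l - 2) * c 1" using Jk unfolding T_def by auto
    have cJ: "c J \<le> 2 ^ (l - 2) * c 1" using JT unfolding T_def by auto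
    have "c (J + 1) \<le> 2 * c J" using st[of J] J1 cpos[of J] by auto
    obtain mJ where mJ: "c J = 2 ^ mJ * c 1" using cpow[of J] J1 by auto
    have "2 ^ mJ \<le> (2::real) ^ (l - 2)" using cJ mJ c1 by simp
    then have a1: "mJ \<le> l - 2" by (simp add: power_increasing_iff)
    have "2 ^ (l - 2) * c 1 < (2 * 2 ^ mJ) * c 1" using cJ1 \<open>c (J + 1) \<le> 2 * c J\<close> mJ
      by (simp add: mult.assoc)
    then have "(2::real) ^ (l - 2) < 2 * 2 ^ mJ" using c1 by (simp only: mult_less_cancel_right_pos)
    then have "(2::real) ^ (l - 2) < 2 ^ (Suc mJ)" by (simp only: power_Suc)
    then have a2: "l - 2 < Suc mJ" by (rule power_less_imp_less_exp[rotated]) simp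
    have "mJ = l - 2" using a1 a2 by simp
    then have "J \<in> S" unfolding S_def using J1 mJ by simp
    then have Sne: "S \<noteq> {}" by blast
    have kpin: "kprev \<in> S" unfolding kpS using Max_in[OF finS Sne] .
    then have ckp: "c kprev = 2 ^ (l - 2) * c 1" "1 \<le> kprev" "kprev \<le> N" unfolding S_def by auto
    have kpk: "kprev < k" using kge by simp
    have "kprev + 1 \<notin> S"
    proof
      assume "kprev + 1 \<in> S" then have "kprev + 1 \<le> kprev" unfolding kpS using Max_ge[OF finS] by blast
      then show False by simp
    qed
    then have "c (kprev + 1) \<noteq> 2 ^ (l - 2) * c 1" unfolding S_def using kpk kN' by auto
    then have ck1: "c (kprev + 1) = 2 ^ (l - 1) * c 1" using st[of kprev] ckp pw by auto
    have "c (kprev + 1) \<le> c j" using cmono[of "kprev + 1" j] j1 j2 kN' by auto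
    moreover have "c j \<le> c k" using cmono[of j k] j1 j2 kN' ckp by auto
    ultimately show ?thesis using ck1 kc by simp
  qed
qed

lemma onorm_le_adj:
  fixes A :: "'a::euclidean_space \<Rightarrow> 'b::euclidean_space" and M :: "'b \<Rightarrow> 'a"
  assumes M: "bounded_linear M" and AM: "\<And>h q. A h \<bullet> q = h \<bullet> M q"
  shows "onorm A \<le> onorm M"
proof (rule onorm_le)
  fix h
  show "norm (A h) \<le> onorm M * norm h"
  proof (cases "A h = 0")
    case True then show ?thesis using onorm_pos_le[OF M] by simp
  next
    case False
    have "norm (A h) * norm (A h) = h \<bullet> M (A h)" using AM[of h "A h"] by (simp add: power2_norm_eq_inner[symmetric] power2_eq_square)
    also have "\<dots> \<le> norm h * norm (M (A h))" by (rule norm_cauchy_schwarz)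
    also have "\<dots> \<le> norm h * (onorm M * norm (A h))" by (intro mult_left_mono onorm[OF M]) simp
    finally have "norm (A h) * norm (A h) \<le> (onorm M * norm h) * norm (A h)" by (simp add: algebra_simps)
    then show ?thesis using False by simp
  qed
qed

lemma onorm_deriv_diff:
  fixes g' :: "'a::euclidean_space \<Rightarrow> 'a \<Rightarrow> 'b::euclidean_space"
  assumes lin: "\<forall>x. linear (g' x)"
  shows "onorm (g' w - g' x) \<le> onorm (\<lambda>q. adjoint (g' w) q - adjoint (g' x) q)"
proof (rule onorm_le_adj)
  have "linear (adjoint (g' w))" "linear (adjoint (g' x))" using adjoint_linear lin by blast+
  then show "bounded_linear (\<lambda>q. adjoint (g' w) q - adjoint (g' x) q)"
    by (intro bounded_linear_sub) (simp_all add: linear_conv_bounded_linear[symmetric])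
  fix h q
  show "(g' w - g' x) h \<bullet> q = h \<bullet> (adjoint (g' w) q - adjoint (g' x) q)"
    using adjoint_works[of "g' w" h q] adjoint_works[of "g' x" h q] lin
    by (simp add: inner_diff_left inner_diff_right)
qed

lemma onorm_deriv:
  fixes g' :: "'a::euclidean_space \<Rightarrow> 'a \<Rightarrow> 'b::euclidean_space"
  assumes lin: "\<forall>x. linear (g' x)"
  shows "onorm (g' w) \<le> onorm (adjoint (g' w))"
proof (rule onorm_le_adj)
  have "linear (adjoint (g' w))" using adjoint_linear lin by blast
  then show "bounded_linear (adjoint (g' w))" by (simp add: linear_conv_bounded_linear[symmetric])
  fix h q
  show "g' w h \<bullet> q = h \<bullet> adjoint (g' w) q" using adjoint_works[of "g' w" h q] lin by simp
qed

lemma seg_in: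
  "t \<in> {0..1} \<Longrightarrow> x + t *\<^sub>R (y - x) \<in> closed_segment x y"
  unfolding in_segment by (intro exI[of _ t]) (auto simp: algebra_simps)

lemma seg_dist:
  fixes x y :: "'a::euclidean_space"
  shows "w \<in> closed_segment x y \<Longrightarrow> norm (w - x) \<le> norm (y - x)"
  using dist_in_closed_segment[of w x y] by (simp add: dist_norm norm_minus_commute)

lemma taylor_g:
  fixes g :: "'a::euclidean_space \<Rightarrow> 'b::euclidean_space"
  assumes diff: "\<forall>x. (g has_derivative g' x) (at x)"
    and lip: "\<forall>x y. onorm (\<lambda>q. adjoint (g' x) q - adjoint (g' y) q) \<le> Lg * norm (x - y)"
    and Lg: "Lg \<ge> 0"
  shows "norm (g y - g x - g' x (y - x)) \<le> Lg * (norm (y - x))\<^sup>2"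
proof -
  have lin: "\<forall>x. linear (g' x)" using diff has_derivative_linear by blast
  have "norm (g y - g x - g' x (y - x)) \<le> norm (y - x) * (Lg * norm (y - x))"
  proof (rule differentiable_bound_linearization[where S = "closed_segment x y"])
    show "\<And>t. t \<in> {0..1} \<Longrightarrow> x + t *\<^sub>R (y - x) \<in> closed_segment x y" by (rule seg_in)
    show "\<And>w. w \<in> closed_segment x y \<Longrightarrow> (g has_derivative g' w) (at w within closed_segment x y)"
      using diff has_derivative_at_withinI by blast
    show "x \<in> closed_segment x y" by simp
    fix w assume w: "w \<in> closed_segment x y"
    have "onorm (g' w - g' x) \<le> onorm (\<lambda>q. adjoint (g' w) q - adjoint (g' x) q)" by (rule onorm_deriv_diff[OF lin])
    also have "\<dots> \<le> Lg * norm (w - x)" using lip by blast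
    also have "\<dots> \<le> Lg * norm (y - x)" using seg_dist[OF w] Lg by (intro mult_left_mono) auto
    finally show "onorm (g' w - g' x) \<le> Lg * norm (y - x)" .
  qed
  then show ?thesis by (simp add: power2_eq_square algebra_simps)
qed

lemma taylor_f:
  fixes f :: "'a::euclidean_space \<Rightarrow> real"
  assumes Hc: "convex H" and HU: "H \<subseteq> U" and diff: "\<forall>x\<in>U. (f has_derivative (\<lambda>d. gf x \<bullet> d)) (at x)"
    and lip: "\<forall>x\<in>H. \<forall>y\<in>H. norm (gf y - gf x) \<le> Lf * norm (y - x)"
    and Lf: "Lf \<ge> 0" and x: "x \<in> H" and y: "y \<in> H"
  shows "f y - f x - gf x \<bullet> (y - x) \<le> Lf * (norm (y - x))\<^sup>2"
proof -
  have segH: "closed_segment x y \<subseteq> H" by (rule closed_segment_subset[OF x y Hc])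
  have "norm (f y - f x - (\<lambda>d. gf x \<bullet> d) (y - x)) \<le> norm (y - x) * (Lf * norm (y - x))"
  proof (rule differentiable_bound_linearization[where S = "closed_segment x y" and f' = "\<lambda>w d. gf w \<bullet> d"])
    show "\<And>t. t \<in> {0..1} \<Longrightarrow> x + t *\<^sub>R (y - x) \<in> closed_segment x y" by (rule seg_in)
    show "\<And>w. w \<in> closed_segment x y \<Longrightarrow> ((\<lambda>w. f w) has_derivative (\<lambda>d. gf w \<bullet> d)) (at w within closed_segment x y)"
      using diff segH HU has_derivative_at_withinI by blast
    show "x \<in> closed_segment x y" by simp
    fix w assume w: "w \<in> closed_segment x y"
    have "onorm ((\<lambda>d. gf w \<bullet> d) - (\<lambda>d. gf x \<bullet> d)) \<le> norm (gf w - gf x)"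
    proof (rule onorm_le)
      fix d
      have "((\<lambda>d. gf w \<bullet> d) - (\<lambda>d. gf x \<bullet> d)) d = (gf w - gf x) \<bullet> d" by (simp add: inner_diff_left)
      then show "norm (((\<lambda>d. gf w \<bullet> d) - (\<lambda>d. gf x \<bullet> d)) d) \<le> norm (gf w - gf x) * norm d"
        using Cauchy_Schwarz_ineq2[of "gf w - gf x" d] by simp
    qed
    also have "\<dots> \<le> Lf * norm (w - x)" using lip w segH x by blast
    also have "\<dots> \<le> Lf * norm (y - x)" using seg_dist[OF w] Lf by (intro mult_left_mono) auto
    finally show "onorm ((\<lambda>d. gf w \<bullet> d) - (\<lambda>d. gf x \<bullet> d)) \<le> Lf * norm (y - x)" .
  qed
  then have "\<bar>f y - f x - gf x \<bullet> (y - x)\<bar> \<le> Lf * (norm (y - x))\<^sup>2" by (simp add: power2_eq_square algebra_simps)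
  then show ?thesis by simp
qed

lemma le_of_small:
  fixes a b C :: real
  assumes H: "\<And>t. 0 < t \<Longrightarrow> t \<le> 1 \<Longrightarrow> a \<le> b + t * C" and C: "C \<ge> 0"
  shows "a \<le> b"
proof (rule ccontr)
  assume "\<not> a \<le> b" then have ab: "a - b > 0" by simp
  define t where "t = min 1 ((a - b) / (C + 1))"
  have t: "0 < t" "t \<le> 1" unfolding t_def using ab C by auto
  have "t * C \<le> (a - b) / (C + 1) * C" unfolding t_def using C by (intro mult_right_mono) auto
  also have "\<dots> < a - b"
  proof -
    have "(a - b) / (C + 1) * C = (a - b) * (C / (C + 1))" by simp
    also have "\<dots> < (a - b) * 1" using ab C by (intro mult_strict_left_mono) auto
    finally show ?thesis by simp
  qed
  finally show False using H[OF t] by simp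
qed

lemma K_grad:
  fixes g :: "'a::euclidean_space \<Rightarrow> 'b::euclidean_space"
  assumes Kc: "K_convex K g" and diff: "\<forall>x. (g has_derivative g' x) (at x)"
    and lip: "\<forall>x y. onorm (\<lambda>q. adjoint (g' x) q - adjoint (g' y) q) \<le> Lg * norm (x - y)"
    and Lg: "Lg \<ge> 0" and q: "q \<in> dual_cone K"
  shows "q \<bullet> g' x (y - x) \<le> q \<bullet> g y - q \<bullet> g x"
proof (rule le_of_small)
  have lin: "linear (g' x)" using diff has_derivative_linear by blast
  define d where "d = y - x"
  show "0 \<le> norm q * Lg * (norm d)\<^sup>2" using Lg by simp
  fix t :: real assume t: "0 < t" "t \<le> 1"
  have "t *\<^sub>R g y + (1 - t) *\<^sub>R g x - g (t *\<^sub>R y + (1 - t) *\<^sub>R x) \<in> K" using Kc t unfolding K_convex_def by auto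
  then have "q \<bullet> (t *\<^sub>R g y + (1 - t) *\<^sub>R g x - g (t *\<^sub>R y + (1 - t) *\<^sub>R x)) \<ge> 0" using q unfolding dual_cone_def by blast
  moreover have pt: "t *\<^sub>R y + (1 - t) *\<^sub>R x = x + t *\<^sub>R d" unfolding d_def by (simp add: algebra_simps)
  ultimately have c1: "q \<bullet> g (x + t *\<^sub>R d) \<le> t * (q \<bullet> g y) + (1 - t) * (q \<bullet> g x)"
    by (simp add: inner_diff_right inner_add_right)
  have n: "norm (g (x + t *\<^sub>R d) - g x - g' x ((x + t *\<^sub>R d) - x)) \<le> Lg * (norm ((x + t *\<^sub>R d) - x))\<^sup>2"
    by (rule taylor_g[OF diff lip Lg])
  have gl: "g' x ((x + t *\<^sub>R d) - x) = t *\<^sub>R g' x d" using linear_scale[OF lin] by simp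
  have nn: "(norm ((x + t *\<^sub>R d) - x))\<^sup>2 = t\<^sup>2 * (norm d)\<^sup>2" using t by (simp add: power_mult_distrib)
  have "- (q \<bullet> (g (x + t *\<^sub>R d) - g x - t *\<^sub>R g' x d)) \<le> norm q * norm (g (x + t *\<^sub>R d) - g x - t *\<^sub>R g' x d)"
    using norm_cauchy_schwarz[of "- q"] by simp
  also have "\<dots> \<le> norm q * (Lg * (t\<^sup>2 * (norm d)\<^sup>2))" using n unfolding gl nn by (intro mult_left_mono) auto
  finally have c2: "t * (q \<bullet> g' x d) \<le> q \<bullet> g (x + t *\<^sub>R d) - q \<bullet> g x + t * (t * (norm q * Lg * (norm d)\<^sup>2))"
    by (simp add: inner_diff_right algebra_simps power2_eq_square)
  have "t * (q \<bullet> g' x d) \<le> t * (q \<bullet> g y - q \<bullet> g x + t * (norm q * Lg * (norm d)\<^sup>2))"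
    using c1 c2 by (simp add: algebra_simps)
  then show "q \<bullet> g' x (y - x) \<le> q \<bullet> g y - q \<bullet> g x + t * (norm q * Lg * (norm (y - x))\<^sup>2)"
    using t unfolding d_def by simp
qed

lemma telesc:
  fixes F :: "nat \<Rightarrow> real"
  assumes "a \<le> b"
  shows "(\<Sum>j\<in>{a+1..b}. F (j - 1) - F j) = F a - F b"
  using assms
proof (induction b rule: dec_induct)
  case base then show ?case by simp
next
  case (step n)
  have "{a+1..Suc n} = insert (Suc n) {a+1..n}" using step by auto
  then have "(\<Sum>j\<in>{a+1..Suc n}. F (j - 1) - F j) = (F n - F (Suc n)) + (\<Sum>j\<in>{a+1..n}. F (j - 1) - F j)"
    by simp
  then show ?case using step by simp
qed

lemma min_avg:
  fixes f :: "nat \<Rightarrow> real"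
  assumes "finite A" "A \<noteq> {}"
  shows "real (card A) * Min (f ` A) \<le> sum f A"
  by (rule sum_bounded_below) (use assms in auto)

lemma dbar_pos:
  fixes H :: "'a::euclidean_space set"
  assumes "compact H" "zbar \<in> interior H"
  shows "infdist zbar (frontier H) > 0"
proof (rule infdist_pos_not_in_closed)
  show "closed (frontier H)" by simp
  have "H \<noteq> {}" using assms(2) interior_subset by blast
  moreover have "H \<noteq> UNIV" using compact_imp_bounded[OF assms(1)] by auto
  ultimately show "frontier H \<noteq> {}" using frontier_eq_empty by blast
  show "zbar \<notin> frontier H" using assms(2) by (simp add: frontier_def)
qed

lemma ball_in_H:
  fixes H :: "'a::euclidean_space set"
  assumes "compact H" "zbar \<in> interior H" "norm (y - zbar) \<le> infdist zbar (frontier H)"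
  shows "y \<in> H"
proof (rule ccontr)
  assume yn: "y \<notin> H"
  have cl: "closed H" using assms(1) compact_imp_closed by blast
  have zH: "zbar \<in> H" using assms(2) interior_subset by blast
  have "closed_segment zbar y \<inter> H \<noteq> {}" using zH by auto
  moreover have "closed_segment zbar y - H \<noteq> {}" using yn by auto
  ultimately have "closed_segment zbar y \<inter> frontier H \<noteq> {}"
    by (intro connected_Int_frontier) auto
  then obtain x where x: "x \<in> closed_segment zbar y" "x \<in> frontier H" by blast
  have xH: "x \<in> H" using x(2) frontier_subset_closed[OF cl] by blast
  then have xy: "x \<noteq> y" using yn by auto
  have "dist zbar y = dist zbar x + dist x y" using x(1) between_mem_segment[of zbar y x] between[of zbar y x] by simp
  moreover have "dist x y > 0" using xy by simp
  ultimately have "dist zbar x < dist zbar y" by simp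
  moreover have "infdist zbar (frontier H) \<le> dist zbar x" using x(2) by (rule infdist_le)
  ultimately show False using assms(3) by (simp add: dist_norm norm_minus_commute)
qed

theorem lemma4p7:
  fixes K :: "'b::euclidean_space set"
    and f :: "'a::euclidean_space \<Rightarrow> real" and gf :: "'a \<Rightarrow> 'a"
    and h :: "'a \<Rightarrow> real" and H :: "'a set" and U :: "'a set"
    and g :: "'a \<Rightarrow> 'b" and g' :: "'a \<Rightarrow> 'a \<Rightarrow> 'b"
    and mf Lf Lg Kh tau lam sigma rhohat etahat :: real and zbar :: "'a"
    and z v :: "nat \<Rightarrow> 'a" and eps c :: "nat \<Rightarrow> real" and p :: "nat \<Rightarrow> 'b"
    and khat :: "nat \<Rightarrow> nat" and N l k :: nat
    and Dh Bf1 Bg0 Bg1 dbar kappa0 C0 phiup philow Rphi :: real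
    and Lpsi :: "nat \<Rightarrow> real" and r :: "nat \<Rightarrow> 'a" and kprev :: nat and Delta :: real
  (* the cone *)
  assumes K_ne: "K \<noteq> {}" and K_closed: "closed K" and K_convex: "convex K" and K_cone: "cone K"
  (* (B1) *)
    and B1_ne: "H \<noteq> {}" and B1_compact: "compact H" and B1_convex: "convex H"
    and B1_h_convex: "convex_on H h"
    and B1_Kh: "0 \<le> Kh" and B1_lip: "\<forall>x\<in>H. \<forall>y\<in>H. \<bar>h x - h y\<bar> \<le> Kh * dist x y"
  (* (B2) *)
    and B2_open: "open U" and B2_sub: "H \<subseteq> U"
    and B2_diff: "\<forall>x\<in>U. (f has_derivative (\<lambda>d. gf x \<bullet> d)) (at x)"
    and B2_mf: "mf > 0" and B2_Lf: "Lf > 0"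
    and B2_weak: "\<forall>x\<in>H. \<forall>y\<in>H. f y - f x - gf x \<bullet> (y - x) \<ge> - (mf / 2) * (norm (y - x))\<^sup>2"
    and B2_lipgrad: "\<forall>x\<in>H. \<forall>y\<in>H. norm (gf y - gf x) \<le> Lf * norm (y - x)"
  (* (B3) *)
    and B3_Kconv: "K_convex K g"
    and B3_diff: "\<forall>x. (g has_derivative g' x) (at x)"
    and B3_Lg: "0 \<le> Lg"
    and B3_lip: "\<forall>x y. onorm (\<lambda>q. adjoint (g' x) q - adjoint (g' y) q) \<le> Lg * norm (x - y)"
  (* (B4) *)
    and B4_int: "zbar \<in> interior H" and B4_tau: "0 < tau" "tau \<le> 1"
    and B4_feas: "- g zbar \<in> K"
    and B4_reg: "\<forall>x\<in>H. \<forall>q\<in>dual_cone K.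
                   max (norm (adjoint (g' x) q)) \<bar>q \<bullet> g zbar\<bar> \<ge> tau * norm q"
  (* constants *)
    and Dh_def: "Dh \<equiv> diameter H"
    and Bf1_def: "Bf1 \<equiv> Sup ((\<lambda>x. norm (gf x)) ` H)"
    and Bg0_def: "Bg0 \<equiv> Sup ((\<lambda>x. norm (g x)) ` H)"
    and Bg1_def: "Bg1 \<equiv> Sup ((\<lambda>x. onorm (adjoint (g' x))) ` H)"
    and dbar_def: "dbar \<equiv> infdist zbar (frontier H)"
    and kappa0_def: "kappa0 \<equiv> 2 * (Kh + Bf1) * Dh
        + (sigma\<^sup>2 / (2 * (1 - sigma)\<^sup>2) + 2 * ((1 + sigma) / (1 - sigma))) * Dh\<^sup>2 / lam"
    and phiup_def: "phiup \<equiv> Inf ((\<lambda>x. f x + h x) ` {x\<in>H. - g x \<in> K})"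
    and philow_def: "philow \<equiv> Inf ((\<lambda>x. f x + h x) ` H)"
    and Rphi_def: "Rphi \<equiv> phiup - philow + Dh\<^sup>2 / lam"
    and C0_def: "C0 \<equiv> max (norm (p 0)) kappa0 / (min 1 dbar * tau)"
  (* inputs of NL-IAPIAL *)
    and lam_pos: "0 < lam" and lam_le: "lam \<le> 1 / (2 * mf)"
    and sigma_pos: "0 < sigma" and sigma_le: "sigma \<le> 1 / sqrt 2"
    and c1_pos: "c 1 > 0" and z0_in: "z 0 \<in> H"
    and rho_pos: "rhohat > 0" and eta_pos: "etahat > 0"
    and khat1: "khat 1 = 0"
  (* iterations k = 1..N are all carried out through step (3) *)
    and Lpsi_def: "Lpsi \<equiv> (\<lambda>j. lam * (Lf + Lg * norm (p (j - 1)) + c j * (Bg0 * Lg + Bg1\<^sup>2)) + 1)"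
    and r_def: "r \<equiv> (\<lambda>j. v j + z (j - 1) - z j)"
    and step1_sub: "\<forall>j\<in>{1..N}. v j \<in> eps_subdiff H
          (\<lambda>u. lam * augL K f h g (c j) u (p (j - 1)) + 1 / 2 * (norm (u - z (j - 1)))\<^sup>2) (eps j) (z j)"
    and step1_eps: "\<forall>j\<in>{1..N}. eps j \<ge> 0"
    and step1_err: "\<forall>j\<in>{1..N}. (norm (v j))\<^sup>2 + 2 * eps j
                        \<le> (sigma / sqrt (Lpsi j))\<^sup>2 * (norm (r j))\<^sup>2"
    and step2_nostop: "\<forall>j\<in>{1..N}.
          let gz = gradLt K gf g' g (c j) (z j) (p (j - 1));
              zh = prox_hat H h lam gz (r j) (Lpsi j) (z j);
              w = (1 / lam) *\<^sub>R (r j + Lpsi j *\<^sub>R (z j - zh));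
              ph = projK K (p (j - 1) + c j *\<^sub>R g zh);
              qh = (1 / c j) *\<^sub>R (p (j - 1) - ph);
              wh = w + gradLt K gf g' g (c j) zh (p (j - 1)) - gz
          in \<not> (norm wh \<le> rhohat \<and> norm qh \<le> etahat)"
    and step3: "\<forall>j\<in>{1..N}. p j = projK K (p (j - 1) + c j *\<^sub>R g (z j))"
    and step4: "\<forall>j\<in>{1..N}.
          if j > khat j + 1 \<and>
             (augL K f h g (c j) (z (khat j + 1)) (p (khat j + 1)) - augL K f h g (c j) (z j) (p j))
               / real (j - khat j - 1)
             \<le> lam * (1 - sigma\<^sup>2) * rhohat\<^sup>2 / (4 * (1 + 2 * sigma)\<^sup>2)
          then c (j + 1) = 2 * c j \<and> khat (j + 1) = j
          else c (j + 1) = c j \<and> khat (j + 1) = khat j"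
  (* the cycle l and the iteration k *)
    and l_ge: "l \<ge> 1" and k_in: "k \<in> {1..N}" and k_cycle: "c k = 2 ^ (l - 1) * c 1"
    and kprev_def: "kprev \<equiv> (if l = 1 then 0 else Max {j\<in>{1..N}. c j = 2 ^ (l - 2) * c 1})"
    and k_ge: "k \<ge> kprev + 2"
    and Delta_def: "Delta \<equiv> (augL K f h g (2 ^ (l - 1) * c 1) (z (kprev + 1)) (p (kprev + 1))
                            - augL K f h g (2 ^ (l - 1) * c 1) (z k) (p k)) / real (k - kprev - 1)"
  shows "Min ((\<lambda>j. (norm (r j))\<^sup>2) ` {kprev + 2..k})
           \<le> 2 * lam / (1 - sigma\<^sup>2) * (Delta + 4 * C0\<^sup>2 / (2 ^ (l - 1) * c 1))
         \<and> Delta \<le> (1 / real (k - kprev - 1)) * (Rphi + 9 * C0\<^sup>2 / (2 * (2 ^ (l - 1) * c 1)))"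
proof -
  note Kc = K_closed K_convex K_cone K_ne
  have Hcl: "closed H" using B1_compact compact_imp_closed by blast
  have bH: "bounded H" using B1_compact compact_imp_bounded by blast
  have diam: "\<forall>x\<in>H. \<forall>y\<in>H. norm (x - y) \<le> Dh"
    unfolding Dh_def using diameter_bounded_bound[OF bH] by (simp add: dist_norm)
  obtain x0 where x0: "x0 \<in> H" using B1_ne by blast
  have Dh0: "Dh \<ge> 0" using diam x0 by force
  have glin: "\<forall>x. linear (g' x)" using B3_diff has_derivative_linear by blast
  have gcont: "continuous_on H g"
    using B3_diff by (intro continuous_at_imp_continuous_on) (auto intro: has_derivative_continuous)
  have "bounded (g ` H)" using compact_continuous_image[OF gcont B1_compact] compact_imp_bounded by blast
  then obtain Mg where Mg: "\<forall>x\<in>H. norm (g x) \<le> Mg" unfolding bounded_iff by blast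
  have bddg: "bdd_above ((\<lambda>x. norm (g x)) ` H)" using Mg by (intro bdd_aboveI2) auto
  have g0b: "\<forall>x\<in>H. norm (g x) \<le> Bg0" unfolding Bg0_def using cSup_upper[OF _ bddg] by blast
  have Bg00: "Bg0 \<ge> 0" using g0b x0 norm_ge_zero order_trans by blast
  have gfbd: "norm (gf x) \<le> norm (gf x0) + Lf * Dh" if "x \<in> H" for x
  proof -
    have "norm (gf x) \<le> norm (gf x0) + norm (gf x - gf x0)" by (metis add_diff_cancel_left' norm_triangle_ineq diff_add_cancel add.commute)
    also have "norm (gf x - gf x0) \<le> Lf * norm (x - x0)" using B2_lipgrad that x0 by blast
    also have "\<dots> \<le> Lf * Dh" using diam that x0 B2_Lf by (intro mult_left_mono) auto
    finally show ?thesis by simp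
  qed
  have bddgf: "bdd_above ((\<lambda>x. norm (gf x)) ` H)" using gfbd by (intro bdd_aboveI2) auto
  have gfb: "\<forall>x\<in>H. norm (gf x) \<le> Bf1" unfolding Bf1_def using cSup_upper[OF _ bddgf] by blast
  have Bf10: "Bf1 \<ge> 0" using gfb x0 norm_ge_zero order_trans by blast
  have adjlin: "bounded_linear (adjoint (g' x))" for x
    using adjoint_linear glin linear_conv_bounded_linear by blast
  have g1bd: "onorm (adjoint (g' x)) \<le> onorm (adjoint (g' x0)) + Lg * Dh" if xH: "x \<in> H" for x
  proof (rule onorm_le)
    fix q
    have M: "bounded_linear (\<lambda>q. adjoint (g' x) q - adjoint (g' x0) q)"
      using adjlin by (intro bounded_linear_sub)
    have "norm (adjoint (g' x) q) \<le> norm (adjoint (g' x0) q) + norm (adjoint (g' x) q - adjoint (g' x0) q)"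
      by (metis add_diff_cancel_left' norm_triangle_ineq diff_add_cancel add.commute)
    also have "norm (adjoint (g' x0) q) \<le> onorm (adjoint (g' x0)) * norm q" by (rule onorm[OF adjlin])
    also have "norm (adjoint (g' x) q - adjoint (g' x0) q) \<le> onorm (\<lambda>q. adjoint (g' x) q - adjoint (g' x0) q) * norm q"
      by (rule onorm[OF M])
    also have "onorm (\<lambda>q. adjoint (g' x) q - adjoint (g' x0) q) * norm q \<le> (Lg * Dh) * norm q"
    proof (intro mult_right_mono)
      have "onorm (\<lambda>q. adjoint (g' x) q - adjoint (g' x0) q) \<le> Lg * norm (x - x0)" using B3_lip by blast
      also have "\<dots> \<le> Lg * Dh" using diam xH x0 B3_Lg by (intro mult_left_mono) auto
      finally show "onorm (\<lambda>q. adjoint (g' x) q - adjoint (g' x0) q) \<le> Lg * Dh" .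
    qed simp
    finally show "norm (adjoint (g' x) q) \<le> (onorm (adjoint (g' x0)) + Lg * Dh) * norm q"
      by (simp add: algebra_simps)
  qed
  have bddg1: "bdd_above ((\<lambda>x. onorm (adjoint (g' x))) ` H)" using g1bd by (intro bdd_aboveI2) auto
  have g1op: "onorm (g' x) \<le> Bg1" if "x \<in> H" for x
  proof -
    have "onorm (g' x) \<le> onorm (adjoint (g' x))" by (rule onorm_deriv[OF glin])
    also have "\<dots> \<le> Bg1" unfolding Bg1_def using cSup_upper[OF _ bddg1] that by blast
    finally show ?thesis .
  qed
  have g1b: "\<forall>x\<in>H. \<forall>y\<in>H. norm (g x - g y) \<le> Bg1 * norm (x - y)"
  proof (intro ballI)
    fix x y assume "x \<in> H" "y \<in> H"
    show "norm (g x - g y) \<le> Bg1 * norm (x - y)"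
      by (rule differentiable_bound[OF B1_convex _ _ \<open>x \<in> H\<close> \<open>y \<in> H\<close>, of g g'])
         (use B3_diff g1op in \<open>auto intro: has_derivative_at_withinI\<close>)
  qed
  have gtay: "\<forall>x y. norm (g y - g x - g' x (y - x)) \<le> Lg * (norm (y - x))\<^sup>2"
    using taylor_g[OF B3_diff B3_lip B3_Lg] by blast
  have ftay: "\<forall>x\<in>H. \<forall>y\<in>H. f y - f x - gf x \<bullet> (y - x) \<le> Lf * (norm (y - x))\<^sup>2"
    using taylor_f[OF B1_convex B2_sub B2_diff B2_lipgrad] B2_Lf by auto
  have ggrad: "\<forall>x y. \<forall>q\<in>dual_cone K. q \<bullet> g' x (y - x) \<le> q \<bullet> g y - q \<bullet> g x"
    using K_grad[OF B3_Kconv B3_diff B3_lip B3_Lg] by blast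
  have sig2: "sigma\<^sup>2 \<le> 1/2"
  proof -
    have "sigma\<^sup>2 \<le> (1 / sqrt 2)\<^sup>2" using sigma_pos sigma_le by (intro power_mono) auto
    then show ?thesis by (simp add: power_divide)
  qed
  have sig1: "sigma < 1"
  proof (rule ccontr)
    assume "\<not> sigma < 1" then have "1 \<le> sigma" by simp
    then have "1 \<le> sigma\<^sup>2" using one_le_power by blast
    then show False using sig2 by simp
  qed
  define m where "m = min 1 dbar"
  have dpos: "dbar > 0" unfolding dbar_def by (rule dbar_pos[OF B1_compact B4_int])
  have mpos: "0 < m" "m \<le> 1" unfolding m_def using dpos by auto
  have ballH: "\<And>y. norm (y - zbar) \<le> m \<Longrightarrow> y \<in> H"
  proof -
    fix y assume "norm (y - zbar) \<le> m"
    then have "norm (y - zbar) \<le> infdist zbar (frontier H)" unfolding m_def dbar_def[symmetric] by simp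
    then show "y \<in> H" by (rule ball_in_H[OF B1_compact B4_int])
  qed
  have st: "\<And>j. j \<in> {1..N} \<Longrightarrow> c (j + 1) = c j \<or> c (j + 1) = 2 * c j"
  proof -
    fix j assume j: "j \<in> {1..N}"
    from step4 j have "if j > khat j + 1 \<and>
             (augL K f h g (c j) (z (khat j + 1)) (p (khat j + 1)) - augL K f h g (c j) (z j) (p j))
               / real (j - khat j - 1)
             \<le> lam * (1 - sigma\<^sup>2) * rhohat\<^sup>2 / (4 * (1 + 2 * sigma)\<^sup>2)
          then c (j + 1) = 2 * c j \<and> khat (j + 1) = j
          else c (j + 1) = c j \<and> khat (j + 1) = khat j" by blast
    then show "c (j + 1) = c j \<or> c (j + 1) = 2 * c j" by (auto split: if_splits)
  qed
  have kprev_eq: "kprev = (if l = 1 then 0 else Max {j\<in>{1..N}. c j = 2 ^ (l - 2) * c 1})"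
    using kprev_def by simp
  note cyc = cycle_lemma(1)[OF c1_pos st l_ge k_in k_cycle kprev_eq k_ge]
  note cpos = cycle_lemma(2)[OF c1_pos st l_ge k_in k_cycle kprev_eq k_ge]
  have zH: "z j \<in> H" if "j \<le> N" for j
  proof (cases "j = 0")
    case True then show ?thesis using z0_in by simp
  next
    case False then have "j \<in> {1..N}" using that by simp
    then show ?thesis using step1_sub unfolding eps_subdiff_def by blast
  qed
  have Lp1: "Lpsi j \<ge> 1" if "j \<in> {1..N}" for j
  proof -
    have "c j > 0" using cpos that by auto
    then have "0 \<le> Lf + Lg * norm (p (j - 1)) + c j * (Bg0 * Lg + Bg1\<^sup>2)"
      using B2_Lf B3_Lg Bg00 by (intro add_nonneg_nonneg mult_nonneg_nonneg) auto
    then show ?thesis unfolding Lpsi_def using lam_pos by simp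
  qed
  have errj: "(norm (v j))\<^sup>2 + 2 * eps j \<le> sigma\<^sup>2 / Lpsi j * (norm (v j + z (j - 1) - z j))\<^sup>2"
    if "j \<in> {1..N}" for j
  proof -
    have eq: "(sigma / sqrt (Lpsi j))\<^sup>2 = sigma\<^sup>2 / Lpsi j" using Lp1[OF that] by (simp add: power_divide)
    from step1_err that have e: "(norm (v j))\<^sup>2 + 2 * eps j \<le> (sigma / sqrt (Lpsi j))\<^sup>2 * (norm (r j))\<^sup>2" by blast
    show ?thesis using e unfolding eq r_def .
  qed
  have kap: "kappa0 = 2 * (Kh + Bf1) * Dh + (sigma\<^sup>2 / (2 * (1 - sigma)\<^sup>2) + 2 * ((1 + sigma) / (1 - sigma))) * Dh\<^sup>2 / lam"
    using kappa0_def by simp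
  have C0eq: "C0 = max (norm (p 0)) kappa0 / (m * tau)" using C0_def unfolding m_def by simp
  have mt: "0 < m * tau" "m * tau \<le> 1" using mpos B4_tau by (auto intro: mult_le_one)
  have kC: "kappa0 / (m * tau) \<le> C0" unfolding C0eq using mt by (intro divide_right_mono) auto
  have p0C: "norm (p 0) \<le> C0"
  proof -
    have "norm (p 0) \<le> max (norm (p 0)) kappa0" by simp
    also have "\<dots> \<le> max (norm (p 0)) kappa0 / (m * tau)"
    proof -
      have mx: "max (norm (p 0)) kappa0 \<ge> 0" using norm_ge_zero[of "p 0"] max.cobounded1 order_trans by blast
      have "max (norm (p 0)) kappa0 * (m * tau) \<le> max (norm (p 0)) kappa0 * 1"
        using mt mx by (intro mult_left_mono) auto
      then show ?thesis using mt by (simp add: le_divide_eq)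
    qed
    finally show ?thesis unfolding C0eq .
  qed
  have nn: "Lg \<ge> 0" "Kh + Bf1 \<ge> 0" "Lf \<ge> 0" using B3_Lg B1_Kh Bf10 B2_Lf by auto
  have pstep: "norm (p (Suc i)) \<le> max (norm (p i)) (kappa0 / (m * tau))" if si: "Suc i \<le> N" for i
  proof -
    have sj: "Suc i \<in> {1..N}" using si by simp
    have sub: "v (Suc i) \<in> eps_subdiff H (\<lambda>u. lam * augL K f h g (c (Suc i)) u (p i) + 1 / 2 * (norm (u - z i))\<^sup>2) (eps (Suc i)) (z (Suc i))"
      using bspec[OF step1_sub sj] by simp
    have e: "eps (Suc i) \<ge> 0" using step1_eps sj by blast
    have err: "(norm (v (Suc i)))\<^sup>2 + 2 * eps (Suc i) \<le> sigma\<^sup>2 / Lpsi (Suc i) * (norm (v (Suc i) + z i - z (Suc i)))\<^sup>2"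
      using errj[OF sj] by simp
    have Lpe: "Lpsi (Suc i) = lam * (Lf + Lg * norm (p i) + c (Suc i) * (Bg0 * Lg + Bg1\<^sup>2)) + 1"
      unfolding Lpsi_def by simp
    have cp: "c (Suc i) > 0" using cpos[of "Suc i"] si by simp
    have "norm (projK K (p i + c (Suc i) *\<^sub>R g (z (Suc i)))) \<le> max (norm (p i))
     ((2 * (Kh + Bf1) * Dh + (sigma\<^sup>2 / (2 * (1 - sigma)\<^sup>2) + 2 * ((1 + sigma) / (1 - sigma))) * Dh\<^sup>2 / lam)
       / (m * tau))"
      by (rule iter_pbound[OF Kc cp lam_pos B1_convex zH[OF si] zH[of i] mpos ballH sub e err Lpe Lp1[OF sj]
            sigma_pos sig2 sig1 gfb g0b g1b ftay gtay glin ggrad B1_h_convex B1_lip B4_feas B4_tau(1) B4_reg diam nn])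
        (use si in simp)
    moreover have "p (Suc i) = projK K (p i + c (Suc i) *\<^sub>R g (z (Suc i)))" using step3 sj by auto
    ultimately show ?thesis unfolding kap by simp
  qed
  have pC: "norm (p j) \<le> C0" if "j \<le> N" for j
    using that
  proof (induction j)
    case 0 then show ?case using p0C by simp
  next
    case (Suc i)
    then have "norm (p i) \<le> C0" by simp
    then show ?case using pstep[OF Suc.prems] kC by simp
  qed
  have C00: "C0 \<ge> 0" using p0C norm_ge_zero order_trans by blast
  define ct where "ct = 2 ^ (l - 1) * c 1"
  have ctpos: "ct > 0" unfolding ct_def using c1_pos by simp
  define Lag where "Lag i = augL K f h g ct (z i) (p i)" for i
  have kN: "k \<le> N" "1 \<le> k" using k_in by auto
  have s1: "1 - sigma\<^sup>2 > 0" using sig2 by simp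
  have pdiff: "(norm (p j - p (j - 1)))\<^sup>2 / ct \<le> 4 * C0\<^sup>2 / ct" if "j \<le> N" for j
  proof -
    have "norm (p j - p (j - 1)) \<le> norm (p j) + norm (p (j - 1))" by (rule norm_triangle_ineq4)
    also have "\<dots> \<le> C0 + C0"
    proof -
      have a: "norm (p j) \<le> C0" using pC that by blast
      have "j - 1 \<le> N" using that by simp
      then have b: "norm (p (j - 1)) \<le> C0" using pC by blast
      show ?thesis using a b by linarith
    qed
    finally have "(norm (p j - p (j - 1)))\<^sup>2 \<le> (2 * C0)\<^sup>2" by (intro power_mono) auto
    then have "(norm (p j - p (j - 1)))\<^sup>2 \<le> 4 * C0\<^sup>2" by (simp add: power_mult_distrib)
    then show ?thesis using ctpos by (intro divide_right_mono) auto
  qed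
  have desc: "(norm (r j))\<^sup>2 \<le> 2 * lam / (1 - sigma\<^sup>2) * (Lag (j - 1) - Lag j + 4 * C0\<^sup>2 / ct)"
    if j: "j \<in> {kprev + 2..k}" for j
  proof -
    have jN: "j \<in> {1..N}" using j kN by auto
    have cj: "c j = ct" using cyc[of j] j unfolding ct_def by simp
    have sub: "v j \<in> eps_subdiff H (\<lambda>u. lam * augL K f h g ct u (p (j - 1)) + 1 / 2 * (norm (u - z (j - 1)))\<^sup>2) (eps j) (z j)"
      using bspec[OF step1_sub jN] cj by simp
    have s2le: "sigma\<^sup>2 / Lpsi j \<le> sigma\<^sup>2" using Lp1[OF jN] by (intro divide_left_mono[where b = 1, simplified]) auto
    have d: "lam * (augL K f h g ct (z (j - 1)) (p (j - 1)) - augL K f h g ct (z j) (p (j - 1)))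
        \<ge> (1 - sigma\<^sup>2) / 2 * (norm (v j + z (j - 1) - z j))\<^sup>2"
      by (rule iter_descent[OF sub zH errj[OF jN] s2le]) (use jN in auto)
    have qc: "augL K f h g ct (z j) (p j) \<le> augL K f h g ct (z j) (p (j - 1)) + (norm (p j - p (j - 1)))\<^sup>2 / ct"
      by (rule augL_q_change[OF Kc ctpos]) (use step3 jN cj in auto)
    have "augL K f h g ct (z j) (p (j - 1)) \<ge> Lag j - 4 * C0\<^sup>2 / ct"
      using qc pdiff[of j] jN unfolding Lag_def by simp
    then have "lam * (augL K f h g ct (z (j - 1)) (p (j - 1)) - augL K f h g ct (z j) (p (j - 1)))
        \<le> lam * (Lag (j - 1) - Lag j + 4 * C0\<^sup>2 / ct)"
      using lam_pos unfolding Lag_def by (intro mult_left_mono) auto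
    then have le: "(1 - sigma\<^sup>2) / 2 * (norm (r j))\<^sup>2 \<le> lam * (Lag (j - 1) - Lag j + 4 * C0\<^sup>2 / ct)"
      using d unfolding r_def by linarith
    define Y where "Y = Lag (j - 1) - Lag j + 4 * C0\<^sup>2 / ct"
    have e1: "(norm (r j))\<^sup>2 * (1 - sigma\<^sup>2) = 2 * ((1 - sigma\<^sup>2) / 2 * (norm (r j))\<^sup>2)" by simp
    have e2: "2 * lam * Y = 2 * (lam * Y)" by simp
    have "(norm (r j))\<^sup>2 * (1 - sigma\<^sup>2) \<le> 2 * lam * Y" unfolding e1 e2 using le unfolding Y_def by linarith
    then have "(norm (r j))\<^sup>2 \<le> 2 * lam * Y / (1 - sigma\<^sup>2)" using s1 by (simp add: le_divide_eq)
    then show ?thesis unfolding Y_def by simp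
  qed
  define n where "n = k - kprev - 1"
  have n1: "n \<ge> 1" unfolding n_def using k_ge by simp
  have npos: "real n > 0" using n1 by simp
  have cardn: "card {kprev + 2..k} = n" unfolding n_def by simp
  have tel0: "(\<Sum>j\<in>{kprev + 1 + 1..k}. Lag (j - 1) - Lag j) = Lag (kprev + 1) - Lag k"
    by (rule telesc) (use k_ge in simp)
  have "{kprev + 1 + 1..k} = {kprev + 2..k}" by simp
  then have tel: "(\<Sum>j\<in>{kprev + 2..k}. Lag (j - 1) - Lag j) = Lag (kprev + 1) - Lag k" using tel0 by simp
  define a where "a = 2 * lam / (1 - sigma\<^sup>2)"
  have sumr: "(\<Sum>j\<in>{kprev + 2..k}. (norm (r j))\<^sup>2) \<le> a * ((Lag (kprev + 1) - Lag k) + real n * (4 * C0\<^sup>2 / ct))"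
  proof -
    have "(\<Sum>j\<in>{kprev + 2..k}. (norm (r j))\<^sup>2) \<le> (\<Sum>j\<in>{kprev + 2..k}. a * ((Lag (j - 1) - Lag j) + 4 * C0\<^sup>2 / ct))"
      using desc unfolding a_def by (intro sum_mono) auto
    also have "\<dots> = a * ((\<Sum>j\<in>{kprev + 2..k}. Lag (j - 1) - Lag j) + real n * (4 * C0\<^sup>2 / ct))"
      using cardn by (simp add: sum_distrib_left[symmetric] sum.distrib n_def)
    finally show ?thesis unfolding tel .
  qed
  have DeltaE: "Delta * real n = Lag (kprev + 1) - Lag k"
    using Delta_def npos unfolding Lag_def ct_def n_def by simp
  have minb: "real n * Min ((\<lambda>j. (norm (r j))\<^sup>2) ` {kprev + 2..k}) \<le> (\<Sum>j\<in>{kprev + 2..k}. (norm (r j))\<^sup>2)"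
  proof -
    have "real (card {kprev + 2..k}) * Min ((\<lambda>j. (norm (r j))\<^sup>2) ` {kprev + 2..k}) \<le> (\<Sum>j\<in>{kprev + 2..k}. (norm (r j))\<^sup>2)"
      by (rule min_avg) (use k_ge in auto)
    then show ?thesis by (simp only: cardn)
  qed
  have part1: "Min ((\<lambda>j. (norm (r j))\<^sup>2) ` {kprev + 2..k}) \<le> a * (Delta + 4 * C0\<^sup>2 / ct)"
  proof -
    have "real n * Min ((\<lambda>j. (norm (r j))\<^sup>2) ` {kprev + 2..k}) \<le> real n * (a * (Delta + 4 * C0\<^sup>2 / ct))"
      using minb sumr DeltaE[symmetric] by (simp add: algebra_simps)
    then show ?thesis using npos by simp
  qed
  define j0 where "j0 = kprev + 1"
  have j0N: "j0 \<in> {1..N}" unfolding j0_def using k_ge kN by auto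
  have cj0: "c j0 = ct" using cyc[of j0] k_ge unfolding ct_def j0_def by simp
  have j0m: "j0 - 1 = kprev" unfolding j0_def by simp
  have sub0: "v j0 \<in> eps_subdiff H (\<lambda>u. lam * augL K f h g ct u (p kprev) + 1 / 2 * (norm (u - z kprev))\<^sup>2) (eps j0) (z j0)"
    using bspec[OF step1_sub j0N] cj0 j0m by simp
  have err0: "(norm (v j0))\<^sup>2 + 2 * eps j0 \<le> sigma\<^sup>2 / Lpsi j0 * (norm (v j0 + z kprev - z j0))\<^sup>2"
    using errj[OF j0N] j0m by simp
  have s2h: "sigma\<^sup>2 / Lpsi j0 \<le> 1/2"
  proof -
    have "sigma\<^sup>2 / Lpsi j0 \<le> sigma\<^sup>2" using Lp1[OF j0N] by (intro divide_left_mono[where b = 1, simplified]) auto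
    then show ?thesis using sig2 by linarith
  qed
  have e0: "eps j0 \<ge> 0" using step1_eps j0N by blast
  have kprevN: "kprev \<le> N" using k_ge kN by simp
  have zbarH: "zbar \<in> H" using ballH[of zbar] mpos by simp
  define FS where "FS = {x\<in>H. - g x \<in> K}"
  have FSne: "FS \<noteq> {}" unfolding FS_def using zbarH B4_feas by blast
  have upb: "augL K f h g ct (z j0) (p kprev) - Dh\<^sup>2 / lam \<le> f zs + h zs" if zs: "zs \<in> FS" for zs
  proof -
    have zsH: "zs \<in> H" and fz: "- g zs \<in> K" using zs unfolding FS_def by auto
    have "lam * augL K f h g ct (z j0) (p kprev) \<le> lam * augL K f h g ct zs (p kprev) + (norm (zs - z kprev))\<^sup>2"
      by (rule iter_upper[OF sub0 zsH err0 s2h e0])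
    also have "augL K f h g ct zs (p kprev) \<le> f zs + h zs" by (rule augL_feasible[where g = g and z = zs, OF K_cone ctpos fz])
    then have "lam * augL K f h g ct zs (p kprev) \<le> lam * (f zs + h zs)" using lam_pos by (intro mult_left_mono) auto
    also have "(norm (zs - z kprev))\<^sup>2 \<le> Dh\<^sup>2" using diam zsH zH[OF kprevN] by (intro power_mono) auto
    finally have "lam * augL K f h g ct (z j0) (p kprev) \<le> lam * (f zs + h zs) + Dh\<^sup>2" by simp
    then have "lam * (augL K f h g ct (z j0) (p kprev) - Dh\<^sup>2 / lam) \<le> lam * (f zs + h zs)"
      using lam_pos by (simp add: algebra_simps)
    then show ?thesis using lam_pos by simp
  qed
  have phiupb: "augL K f h g ct (z j0) (p kprev) - Dh\<^sup>2 / lam \<le> phiup"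
    unfolding phiup_def FS_def[symmetric] using FSne upb by (intro cInf_greatest) auto
  have qc0: "Lag j0 \<le> augL K f h g ct (z j0) (p kprev) + 4 * C0\<^sup>2 / ct"
  proof -
    have "augL K f h g ct (z j0) (p j0) \<le> augL K f h g ct (z j0) (p (j0 - 1)) + (norm (p j0 - p (j0 - 1)))\<^sup>2 / ct"
      by (rule augL_q_change[OF Kc ctpos]) (use step3 j0N cj0 in auto)
    then show ?thesis using pdiff[of j0] j0N j0m unfolding Lag_def by simp
  qed
  have fcont: "continuous_on H f"
    using B2_diff B2_sub by (intro continuous_at_imp_continuous_on) (auto intro: has_derivative_continuous)
  have "Kh-lipschitz_on H h"
    using B1_lip B1_Kh by (intro lipschitz_onI) (auto simp: dist_real_def)
  then have hcont: "continuous_on H h" by (rule lipschitz_on_continuous_on)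
  have phcont: "continuous_on H (\<lambda>x. f x + h x)" using fcont hcont by (intro continuous_on_add)
  have "bounded ((\<lambda>x. f x + h x) ` H)" using compact_continuous_image[OF phcont B1_compact] compact_imp_bounded by blast
  then have bddb: "bdd_below ((\<lambda>x. f x + h x) ` H)" by (rule bounded_imp_bdd_below)
  have low: "Lag k \<ge> philow - C0\<^sup>2 / (2 * ct)"
  proof -
    have "Lag k \<ge> f (z k) + h (z k) - (norm (p k))\<^sup>2 / (2 * ct)" unfolding Lag_def by (rule augL_lower[OF ctpos])
    moreover have "philow \<le> f (z k) + h (z k)" unfolding philow_def using zH[OF kN(1)] bddb by (intro cInf_lower) auto
    moreover have "(norm (p k))\<^sup>2 / (2 * ct) \<le> C0\<^sup>2 / (2 * ct)"
      using pC[OF kN(1)] ctpos by (intro divide_right_mono power_mono) auto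
    ultimately show ?thesis by linarith
  qed
  have nD: "Delta * real n \<le> Rphi + 9 * C0\<^sup>2 / (2 * ct)"
  proof -
    have "Delta * real n \<le> phiup + Dh\<^sup>2 / lam + 4 * C0\<^sup>2 / ct - (philow - C0\<^sup>2 / (2 * ct))"
      using DeltaE qc0 phiupb low unfolding j0_def by linarith
    also have "\<dots> = Rphi + 9 * C0\<^sup>2 / (2 * ct)" using Rphi_def ctpos by (simp add: field_simps)
    finally show ?thesis .
  qed
  have part2: "Delta \<le> (1 / real n) * (Rphi + 9 * C0\<^sup>2 / (2 * ct))"
    using nD npos by (simp add: field_simps)
  show ?thesis using part1 part2 unfolding a_def ct_def n_def by simp
qed

end
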